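(* Let $I\subseteq\{1,\dots,m\}$, let $A\subseteq F_I(\Gamma^m)$ be a definable set all of whose points have non-negative coordinates, and let $f_1,\dots,f_r$ be definable maps from $A$ to $\mathcal{Q}$. Then there exists a largely continuous, positive, integrally affine map $f:A\to\mathcal{Z}$ such that $f(x)\geq\max_jf_j(x)$ for all $x\in A$ and $\bar f=+\infty$ on $\partial A$. More precisely, $f$ can be taken of the form $f(x)=\beta+\alpha\sum_{i\in I}x_i$ on $A$, for some positive $\alpha\in\mathbb{Z}$ and $\beta\in\mathcal{Z}$.
   Context: $\mathcal{Z}$ is a $\mathbb{Z}$-group (linearly ordered abelian group with smallest positive element $1$, $|\mathcal{Z}/n\mathcal{Z}|=n$ for all $n\geq1$), $\mathcal{Q}$ its divisible hull, $\Gamma=\mathcal{Z}\cup\{+\infty\}$, $\Omega=\mathcal{Q}\cup\{+\infty\}$. Topology on $\Omega$ generated by open intervals and $]a,+\infty]$; product topology on $\Omega^m$; $\overline A$ closure; frontier $\partial A$ = closure of $\overline A\setminus A$. $F_I(\Gamma^m)$: points of $\Gamma^m$ whose non-$+\infty$ coordinates are exactly those indexed by $I$, identified with $\mathcal{Z}^{|I|}$. Definable: $A\subseteq\Gamma^m$ is definable if each $A\cap F_K(\Gamma^m)$ is first-order definable with parameters in $\mathcal{Z}$ in the Presburger language $\{0,1,+,\leq,(\equiv_n)_{n\geq1}\}$; $g:A\to\Omega$ is definable if for some integer $n\geq1$, $ng$ takes values in $\Gamma$ and on each $A\cap F_K(\Gamma^m)$ is either constantly $+\infty$ or a map into $\mathcal{Z}$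 with definable graph. $f$ is integrally affine on $A\subseteq F_I(\Gamma^m)$ if $f(a)=\alpha_0+\sum_{i\in I}\alpha_ia_i$ with $\alpha_0\in\mathcal{Z}$, $\alpha_i\in\mathbb{Z}$; largely continuous if it extends to a continuous $\bar f$ on $\overline A$; positive if $f>0$ on $A$. *)

theory Defs
  imports "HOL-Analysis.Analysis"
begin

primrec nmul :: "nat \<Rightarrow> 'a::ab_group_add \<Rightarrow> 'a" where
  "nmul 0 x = 0"
| "nmul (Suc n) x = x + nmul n x"

definition zmul :: "int \<Rightarrow> 'a::ab_group_add \<Rightarrow> 'a" where
  "zmul k x = (if 0 \<le> k then nmul (nat k) x else - nmul (nat (- k)) x)"

text \<open>A Z-group: a linearly ordered abelian group with smallest positive element e
  (playing the role of 1) such that Z/nZ has exactly n elements for every n \<ge> 1.\<close>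
definition zgroup :: "'z::linordered_ab_group_add \<Rightarrow> bool" where
  "zgroup e \<longleftrightarrow> 0 < e \<and> (\<forall>x. 0 < x \<longrightarrow> e \<le> x) \<and>
     (\<forall>n\<ge>1. card ((UNIV::'z set) // {(x, y). \<exists>q. x - y = nmul n q}) = n)"

definition divisible_hull :: "('z::linordered_ab_group_add \<Rightarrow> 'q::linordered_ab_group_add) \<Rightarrow> bool" where
  "divisible_hull iota \<longleftrightarrow>
     (\<forall>a b. iota (a + b) = iota a + iota b) \<and>
     (\<forall>a b. a < b \<longrightarrow> iota a < iota b) \<and>
     (\<forall>y::'q. \<forall>n\<ge>1. \<exists>w. nmul n w = y) \<and>
     (\<forall>y. \<exists>n\<ge>1. nmul n y \<in> range iota)"

datatype 'a ext = Fin 'a | PInf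

fun eless :: "'a::linorder ext \<Rightarrow> 'a ext \<Rightarrow> bool" where
  "eless (Fin a) (Fin b) = (a < b)"
| "eless (Fin a) PInf = True"
| "eless PInf _ = False"

fun emap :: "('a \<Rightarrow> 'b) \<Rightarrow> 'a ext \<Rightarrow> 'b ext" where
  "emap g (Fin a) = Fin (g a)"
| "emap g PInf = PInf"

fun eval :: "'a::zero ext \<Rightarrow> 'a" where
  "eval (Fin a) = a"
| "eval PInf = 0"

text \<open>Topology on Omega = Q \<union> {+\<infinity>}: generated by the open intervals ]a,b[ and
  the intervals ]a,+\<infinity>].\<close>
definition Omega_top :: "'q::linorder ext topology" where
  "Omega_top = topology_generated_by
     ({{y. eless a y \<and> eless y b} | a b. True} \<union> {{y. eless a y} | a. True})"

text \<open>Omega^m with the product topology; points are functions on {1..m}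
  (extensional, i.e. undefined outside {1..m}).\<close>
definition Omega_m_top :: "nat \<Rightarrow> (nat \<Rightarrow> 'q::linorder ext) topology" where
  "Omega_m_top m = product_topology (\<lambda>_. Omega_top) {1..m}"

text \<open>Points of Gamma^m (Gamma = Z \<union> {+\<infinity>}).\<close>
definition Gamma_m :: "nat \<Rightarrow> (nat \<Rightarrow> 'z ext) set" where
  "Gamma_m m = PiE {1..m} (\<lambda>_. UNIV)"

definition F_I :: "nat \<Rightarrow> nat set \<Rightarrow> (nat \<Rightarrow> 'z ext) set" where
  "F_I m I = {x \<in> Gamma_m m. \<forall>i\<in>{1..m}. (x i \<noteq> PInf \<longleftrightarrow> i \<in> I)}"

definition lift :: "nat \<Rightarrow> ('z \<Rightarrow> 'q) \<Rightarrow> (nat \<Rightarrow> 'z ext) \<Rightarrow> (nat \<Rightarrow> 'q ext)" where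
  "lift m iota x = restrict (\<lambda>i. emap iota (x i)) {1..m}"

datatype 'z pterm = PVar nat | PPar 'z | PZero | POne | PPlus "'z pterm" "'z pterm"

datatype 'z pform = PEq "'z pterm" "'z pterm" | PLe "'z pterm" "'z pterm"
  | PCong nat "'z pterm" "'z pterm" | PNeg "'z pform" | PConj "'z pform" "'z pform"
  | PEx nat "'z pform"

primrec tval :: "'z::linordered_ab_group_add \<Rightarrow> (nat \<Rightarrow> 'z) \<Rightarrow> 'z pterm \<Rightarrow> 'z" where
  "tval e env (PVar i) = env i"
| "tval e env (PPar c) = c"
| "tval e env PZero = 0"
| "tval e env POne = e"
| "tval e env (PPlus s t) = tval e env s + tval e env t"

primrec psat :: "'z::linordered_ab_group_add \<Rightarrow> (nat \<Rightarrow> 'z) \<Rightarrow> 'z pform \<Rightarrow> bool" where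
  "psat e env (PEq s t) = (tval e env s = tval e env t)"
| "psat e env (PLe s t) = (tval e env s \<le> tval e env t)"
| "psat e env (PCong n s t) = (\<exists>q. tval e env s - tval e env t = nmul n q)"
| "psat e env (PNeg \<phi>) = (\<not> psat e env \<phi>)"
| "psat e env (PConj \<phi> \<psi>) = (psat e env \<phi> \<and> psat e env \<psi>)"
| "psat e env (PEx i \<phi>) = (\<exists>z. psat e (env(i := z)) \<phi>)"

text \<open>Identification of F_K(Gamma^m) with Z^|K|: variable i (i in K) is the i-th coordinate.
  Variable 0 is unused by coordinates and serves as the output variable of graphs.\<close>
definition coord_env :: "nat set \<Rightarrow> (nat \<Rightarrow> 'z::zero ext) \<Rightarrow> nat \<Rightarrow> 'z" where
  "coord_env K x = (\<lambda>i. if i \<in> K then eval (x i) else 0)"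

definition definable_set :: "'z::linordered_ab_group_add \<Rightarrow> nat \<Rightarrow> (nat \<Rightarrow> 'z ext) set \<Rightarrow> bool" where
  "definable_set e m A \<longleftrightarrow> A \<subseteq> Gamma_m m \<and>
     (\<forall>K\<subseteq>{1..m}. \<exists>\<phi>. \<forall>x\<in>F_I m K. (x \<in> A \<longleftrightarrow> psat e (coord_env K x) \<phi>))"

definition emul :: "nat \<Rightarrow> 'q::ab_group_add ext \<Rightarrow> 'q ext" where
  "emul n y = (case y of Fin a \<Rightarrow> Fin (nmul n a) | PInf \<Rightarrow> PInf)"

definition definable_fun :: "'z::linordered_ab_group_add \<Rightarrow> ('z \<Rightarrow> 'q::linordered_ab_group_add) \<Rightarrow> nat
     \<Rightarrow> (nat \<Rightarrow> 'z ext) set \<Rightarrow> ((nat \<Rightarrow> 'z ext) \<Rightarrow> 'q ext) \<Rightarrow> bool" where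
  "definable_fun e iota m A g \<longleftrightarrow> (\<exists>n\<ge>1.
     (\<forall>x\<in>A. emul n (g x) \<in> range (emap iota)) \<and>
     (\<forall>K\<subseteq>{1..m}.
        (\<forall>x\<in>A \<inter> F_I m K. g x = PInf) \<or>
        ((\<forall>x\<in>A \<inter> F_I m K. g x \<noteq> PInf) \<and>
         (\<exists>\<psi>. \<forall>x\<in>F_I m K. \<forall>z. (x \<in> A \<and> emul n (g x) = Fin (iota z))
                 \<longleftrightarrow> psat e ((coord_env K x)(0 := z)) \<psi>))))"

definition integrally_affine :: "nat set \<Rightarrow> (nat \<Rightarrow> 'z::linordered_ab_group_add ext) set
     \<Rightarrow> ((nat \<Rightarrow> 'z ext) \<Rightarrow> 'z) \<Rightarrow> bool" where
  "integrally_affine I A f \<longleftrightarrow> (\<exists>a0 (a::nat \<Rightarrow> int). \<forall>x\<in>A.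
      f x = a0 + (\<Sum>i\<in>I. zmul (a i) (eval (x i))))"

definition gclosure :: "nat \<Rightarrow> ('z \<Rightarrow> 'q::linorder) \<Rightarrow> (nat \<Rightarrow> 'z ext) set \<Rightarrow> (nat \<Rightarrow> 'q ext) set" where
  "gclosure m iota A = Omega_m_top m closure_of (lift m iota ` A)"

definition gfrontier :: "nat \<Rightarrow> ('z \<Rightarrow> 'q::linorder) \<Rightarrow> (nat \<Rightarrow> 'z ext) set \<Rightarrow> (nat \<Rightarrow> 'q ext) set" where
  "gfrontier m iota A = Omega_m_top m closure_of (gclosure m iota A - lift m iota ` A)"

definition cont_extension :: "nat \<Rightarrow> ('z \<Rightarrow> 'q::linorder) \<Rightarrow> (nat \<Rightarrow> 'z ext) set
     \<Rightarrow> ((nat \<Rightarrow> 'z ext) \<Rightarrow> 'z) \<Rightarrow> ((nat \<Rightarrow> 'q ext) \<Rightarrow> 'q ext) \<Rightarrow> bool" where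
  "cont_extension m iota A f fbar \<longleftrightarrow>
     continuous_map (subtopology (Omega_m_top m) (gclosure m iota A)) Omega_top fbar \<and>
     (\<forall>x\<in>A. fbar (lift m iota x) = Fin (iota (f x)))"

definition largely_continuous :: "nat \<Rightarrow> ('z \<Rightarrow> 'q::linorder) \<Rightarrow> (nat \<Rightarrow> 'z ext) set
     \<Rightarrow> ((nat \<Rightarrow> 'z ext) \<Rightarrow> 'z) \<Rightarrow> bool" where
  "largely_continuous m iota A f \<longleftrightarrow> (\<exists>fbar. cont_extension m iota A f fbar)"

end

theory Submission
  imports Defs
begin

lemma nmul_add: "nmul (a + b) x = nmul a x + nmul b x"
  by (induction a) (simp_all add: add.assoc)

lemma nmul_add_right: "nmul n (x + y) = nmul n x + nmul n y"
  by (induction n) (simp_all add: algebra_simps)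

lemma nmul_zero[simp]: "nmul n 0 = 0"
  by (induction n) simp_all

lemma nmul_minus: "nmul n (- x) = - nmul n x"
  by (induction n) (simp_all add: algebra_simps)

lemma nmul_diff_right: "nmul n (x - y) = nmul n x - nmul n y"
  using nmul_add_right[of n x "-y"] nmul_minus[of n y] by simp

lemma nmul_mult: "nmul (a * b) x = nmul a (nmul b x)"
  by (induction a) (simp_all add: nmul_add nmul_add_right)

lemma nmul_one[simp]: "nmul 1 x = x" by simp

lemma nmul_sub: "b \<le> a \<Longrightarrow> nmul (a - b) x = nmul a x - nmul b x"
  using nmul_add[of "a-b" b x] by simp

lemma zmul_diff: "zmul (int a - int b) x = nmul a x - nmul b x"
proof (cases "b \<le> a")
  case True
  then have "nat (int a - int b) = a - b" by simp
  then show ?thesis using True by (simp add: zmul_def nmul_sub)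
next
  case False
  then have "nat (- (int a - int b)) = b - a" by simp
  then show ?thesis using False by (simp add: zmul_def nmul_sub)
qed

lemma zmul_nat[simp]: "zmul (int a) x = nmul a x"
  using zmul_diff[of a 0 x] by simp

lemma zmul_add: "zmul (k + l) x = zmul k x + zmul l x"
proof -
  obtain a b where k: "k = int a - int b" by (rule int_diff_cases)
  obtain c d where l: "l = int c - int d" by (rule int_diff_cases)
  have "k + l = int (a + c) - int (b + d)" using k l by simp
  then have "zmul (k + l) x = nmul (a+c) x - nmul (b+d) x" by (simp only: zmul_diff)
  also have "\<dots> = zmul k x + zmul l x" unfolding k l zmul_diff nmul_add by (simp add: algebra_simps)
  finally show ?thesis .
qed

lemma zmul_0[simp]: "zmul 0 x = 0" by (simp add: zmul_def)
lemma zmul_1[simp]: "zmul 1 x = x" by (simp add: zmul_def)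

lemma zmul_neg: "zmul (- k) x = - zmul k x"
  using zmul_add[of k "-k" x] by (simp add: eq_neg_iff_add_eq_0 add.commute)

lemma zmul_add_right: "zmul k (x + y) = zmul k x + zmul k y"
proof -
  obtain a b where k: "k = int a - int b" by (rule int_diff_cases)
  show ?thesis unfolding k zmul_diff nmul_add_right by (simp add: algebra_simps)
qed

lemma zmul_zero[simp]: "zmul k 0 = 0"
  using zmul_add_right[of k 0 0] by simp

lemma zmul_minus: "zmul k (- x) = - zmul k x"
  using zmul_add_right[of k x "-x"] by (simp add: eq_neg_iff_add_eq_0 add.commute)

lemma zmul_diff_right: "zmul k (x - y) = zmul k x - zmul k y"
  using zmul_add_right[of k x "-y"] zmul_minus[of k y] by simp

lemma zmul_nmul: "zmul k (nmul n x) = nmul n (zmul k x)"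
proof -
  obtain a b where k: "k = int a - int b" by (rule int_diff_cases)
  then show ?thesis
    by (simp add: zmul_diff nmul_diff_right flip: nmul_mult) (simp add: mult.commute)
qed

lemma zmul_mult: "zmul (k * l) x = zmul k (zmul l x)"
proof -
  obtain a b where k: "k = int a - int b" by (rule int_diff_cases)
  obtain c d where l: "l = int c - int d" by (rule int_diff_cases)
  have "k * l = int (a*c + b*d) - int (a*d + b*c)" unfolding k l by (simp add: algebra_simps)
  then have "zmul (k * l) x = nmul (a*c + b*d) x - nmul (a*d + b*c) x" by (simp only: zmul_diff)
  also have "\<dots> = (nmul c (nmul a x) - nmul c (nmul b x)) - (nmul d (nmul a x) - nmul d (nmul b x))"
    by (simp add: nmul_add mult.commute[of a c] mult.commute[of a d] mult.commute[of b c] mult.commute[of b d] nmul_mult)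
  also have "\<dots> = zmul k (zmul l x)"
    unfolding l zmul_diff zmul_diff_right zmul_nmul unfolding k zmul_diff nmul_diff_right ..
  finally show ?thesis .
qed

lemma zmul_sum: "zmul k (sum f S) = (\<Sum>i\<in>S. zmul k (f i))"
  using sum_comp_morphism[of "zmul k" f S] by (simp add: zmul_add_right comp_def)

lemma nmul_sum: "nmul k (sum f S) = (\<Sum>i\<in>S. nmul k (f i))"
  using zmul_sum[of "int k" f S] by simp

lemma nmul_hom:
  assumes "\<And>a b. h (a + b) = h a + h b"
  shows "h (nmul n x) = nmul n (h x)"
proof -
  have h0: "h 0 = 0" using assms[of 0 0] by simp
  show ?thesis by (induction n) (simp_all add: h0 assms)
qed


lemma nmul_nonneg: "0 \<le> (x::'a::linordered_ab_group_add) \<Longrightarrow> 0 \<le> nmul n x"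
  by (induction n) simp_all

lemma nmul_mono: "(x::'a::linordered_ab_group_add) \<le> y \<Longrightarrow> nmul n x \<le> nmul n y"
  by (induction n) (simp_all add: add_mono)

lemma nmul_strict_mono: "(x::'a::linordered_ab_group_add) < y \<Longrightarrow> n \<ge> 1 \<Longrightarrow> nmul n x < nmul n y"
proof (induction n)
  case (Suc n) show ?case
  proof (cases "n = 0")
    case True then show ?thesis using Suc by simp
  next
    case False then show ?thesis using Suc by (simp add: add_strict_mono)
  qed
qed simp

lemma nmul_le_iff: "n \<ge> 1 \<Longrightarrow> nmul n x \<le> nmul n (y::'a::linordered_ab_group_add) \<longleftrightarrow> x \<le> y"
proof
  assume n: "n \<ge> 1" and h: "nmul n x \<le> nmul n y"
  show "x \<le> y"
  proof (rule ccontr)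
    assume "\<not> x \<le> y" then have "y < x" by simp
    from nmul_strict_mono[OF this n] h show False by simp
  qed
next
  assume "x \<le> y" then show "nmul n x \<le> nmul n y" by (rule nmul_mono)
qed

lemma nmul_less_iff: "n \<ge> 1 \<Longrightarrow> nmul n x < nmul n (y::'a::linordered_ab_group_add) \<longleftrightarrow> x < y"
  using nmul_le_iff[of n y x] by (simp add: not_le[symmetric])

lemma nmul_inj: "n \<ge> 1 \<Longrightarrow> nmul n x = nmul n (y::'a::linordered_ab_group_add) \<longleftrightarrow> x = y"
  using nmul_le_iff[of n x y] nmul_le_iff[of n y x] by (auto intro: antisym)

lemma nmul_ge_self: "0 \<le> (x::'a::linordered_ab_group_add) \<Longrightarrow> n \<ge> 1 \<Longrightarrow> x \<le> nmul n x"
proof (induction n)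
  case (Suc n) then show ?case by (cases n) (simp_all add: add_increasing2 nmul_nonneg)
qed simp

lemma nmul_mono_n: "0 \<le> (x::'a::linordered_ab_group_add) \<Longrightarrow> a \<le> b \<Longrightarrow> nmul a x \<le> nmul b x"
  using nmul_add[of a "b-a" x] nmul_nonneg[of x "b-a"] by simp

lemma nmul_strict_mono_n: "0 < (x::'a::linordered_ab_group_add) \<Longrightarrow> a < b \<Longrightarrow> nmul a x < nmul b x"
  using nmul_add[of a "b-a" x] nmul_strict_mono[of 0 x "b-a"] by simp

lemma zmul_pos_le0_iff: "k > 0 \<Longrightarrow> zmul k (x::'a::linordered_ab_group_add) \<le> 0 \<longleftrightarrow> x \<le> 0"
  using nmul_le_iff[of "nat k" x 0] by (simp add: zmul_def)

lemma zmul_pos_mono: "k \<ge> 0 \<Longrightarrow> (x::'a::linordered_ab_group_add) \<le> y \<Longrightarrow> zmul k x \<le> zmul k y"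
  by (simp add: zmul_def nmul_mono)

lemma zmul_abs_le: "zmul k (x::'a::linordered_ab_group_add) \<le> nmul (nat \<bar>k\<bar>) (max x (-x))"
proof (cases "k \<ge> 0")
  case True
  then show ?thesis by (simp add: zmul_def nmul_mono)
next
  case False
  then have "zmul k x = nmul (nat (-k)) (-x)" by (simp add: zmul_def nmul_minus)
  also have "\<dots> \<le> nmul (nat \<bar>k\<bar>) (max x (-x))" using False by (simp add: nmul_mono)
  finally show ?thesis .
qed

type_synonym 'z lt = "(nat \<Rightarrow> int) \<times> 'z"

definition lval :: "nat \<Rightarrow> (nat \<Rightarrow> 'z::ab_group_add) \<Rightarrow> 'z lt \<Rightarrow> 'z" where
  "lval N env t = snd t + (\<Sum>i<N. zmul (fst t i) (env i))"

definition tadd :: "'z::ab_group_add lt \<Rightarrow> 'z lt \<Rightarrow> 'z lt" where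
  "tadd s t = ((\<lambda>i. fst s i + fst t i), snd s + snd t)"
definition tscale :: "int \<Rightarrow> 'z::ab_group_add lt \<Rightarrow> 'z lt" where
  "tscale m t = ((\<lambda>i. m * fst t i), zmul m (snd t))"
definition tconst :: "'z::ab_group_add \<Rightarrow> 'z lt" where
  "tconst c = ((\<lambda>_. 0), c)"
definition tvar :: "nat \<Rightarrow> 'z::ab_group_add lt" where
  "tvar v = ((\<lambda>i. if i = v then 1 else 0), 0)"
definition tdrop :: "nat \<Rightarrow> 'z::ab_group_add lt \<Rightarrow> 'z lt" where
  "tdrop v t = ((fst t)(v := 0), snd t)"

lemma lval_tadd: "lval N env (tadd s t) = lval N env s + lval N env t"
  by (simp add: lval_def tadd_def zmul_add sum.distrib algebra_simps)

lemma lval_tscale: "lval N env (tscale m t) = zmul m (lval N env t)"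
  by (simp add: lval_def tscale_def zmul_mult zmul_add_right zmul_sum)

lemma lval_tconst[simp]: "lval N env (tconst c) = c"
  by (simp add: lval_def tconst_def)

lemma lval_tvar: "v < N \<Longrightarrow> lval N env (tvar v) = env v"
proof -
  assume v: "v < N"
  have "(\<Sum>i<N. zmul (if i = v then 1 else 0) (env i)) = (\<Sum>i<N. if i = v then env i else 0)"
    by (rule sum.cong) auto
  also have "\<dots> = env v" using v by (simp add: sum.delta)
  finally show ?thesis by (simp add: lval_def tvar_def)
qed

lemma lval_decomp:
  assumes "v < N"
  shows "lval N (env(v := a)) t = lval N env (tdrop v t) + zmul (fst t v) a"
proof -
  have fin: "finite {..<N}" by simp
  have vin: "v \<in> {..<N}" using assms by simp
  have "(\<Sum>i<N. zmul (fst t i) ((env(v := a)) i)) = zmul (fst t v) a + (\<Sum>i\<in>{..<N} - {v}. zmul (fst t i) (env i))"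
    using sum.remove[OF fin vin, of "\<lambda>i. zmul (fst t i) ((env(v := a)) i)"]
    by (simp add: sum.cong[OF refl, of "{..<N} - {v}" "\<lambda>i. zmul (fst t i) ((env(v := a)) i)" "\<lambda>i. zmul (fst t i) (env i)"])
  moreover have "(\<Sum>i<N. zmul (((fst t)(v := 0)) i) (env i)) = (\<Sum>i\<in>{..<N} - {v}. zmul (fst t i) (env i))"
    using sum.remove[OF fin vin, of "\<lambda>i. zmul (((fst t)(v := 0)) i) (env i)"]
    by (simp add: sum.cong[OF refl, of "{..<N} - {v}" "\<lambda>i. zmul (((fst t)(v := 0)) i) (env i)" "\<lambda>i. zmul (fst t i) (env i)"])
  ultimately show ?thesis by (simp add: lval_def tdrop_def algebra_simps)
qed

lemma tdrop_tdrop[simp]: "tdrop v (tdrop v t) = tdrop v t"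
  by (simp add: tdrop_def)

lemma fst_tdrop_v[simp]: "fst (tdrop v t) v = 0"
  by (simp add: tdrop_def)

lemma lval_tdrop_upd: "v < N \<Longrightarrow> lval N (env(v := a)) (tdrop v t) = lval N env (tdrop v t)"
  using lval_decomp[of v N env a "tdrop v t"] by simp

lemma lval_upd_coef0: "v < N \<Longrightarrow> fst t v = 0 \<Longrightarrow> lval N (env(v := a)) t = lval N (env(v := b)) t"
  using lval_decomp[of v N env a t] lval_decomp[of v N env b t] by simp

section \<open>Literals\<close>

datatype 'z lit = LLe "'z lt" | LDv nat "'z lt" | LNDv nat "'z lt"

definition dv :: "nat \<Rightarrow> 'z::ab_group_add \<Rightarrow> bool" where
  "dv d x \<longleftrightarrow> (\<exists>q. x = nmul d q)"

fun lsat :: "nat \<Rightarrow> (nat \<Rightarrow> 'z::linordered_ab_group_add) \<Rightarrow> 'z lit \<Rightarrow> bool" where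
  "lsat N env (LLe t) = (lval N env t \<le> 0)"
| "lsat N env (LDv d t) = dv d (lval N env t)"
| "lsat N env (LNDv d t) = (\<not> dv d (lval N env t))"

fun lmod :: "'z lit \<Rightarrow> nat" where
  "lmod (LLe t) = 1" | "lmod (LDv d t) = d" | "lmod (LNDv d t) = d"

fun lterm :: "'z lit \<Rightarrow> 'z lt" where
  "lterm (LLe t) = t" | "lterm (LDv d t) = t" | "lterm (LNDv d t) = t"

fun lmap :: "('z lt \<Rightarrow> 'z lt) \<Rightarrow> 'z lit \<Rightarrow> 'z lit" where
  "lmap f (LLe t) = LLe (f t)" | "lmap f (LDv d t) = LDv d (f t)" | "lmap f (LNDv d t) = LNDv d (f t)"

lemma lmod_lmap[simp]: "lmod (lmap f L) = lmod L" by (cases L) auto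
lemma lterm_lmap[simp]: "lterm (lmap f L) = f (lterm L)" by (cases L) auto

definition csat :: "nat \<Rightarrow> (nat \<Rightarrow> 'z::linordered_ab_group_add) \<Rightarrow> 'z lit list \<Rightarrow> bool" where
  "csat N env C \<longleftrightarrow> (\<forall>L\<in>set C. lsat N env L)"

definition dsat :: "nat \<Rightarrow> (nat \<Rightarrow> 'z::linordered_ab_group_add) \<Rightarrow> 'z lit list list \<Rightarrow> bool" where
  "dsat N env F \<longleftrightarrow> (\<exists>C\<in>set F. csat N env C)"

definition wfc :: "'z lit list \<Rightarrow> bool" where
  "wfc C \<longleftrightarrow> (\<forall>L\<in>set C. lmod L \<ge> 1)"

definition wfd :: "'z lit list list \<Rightarrow> bool" where
  "wfd F \<longleftrightarrow> (\<forall>C\<in>set F. wfc C)"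

lemma dv_shift: "dv d (x + nmul d w) \<longleftrightarrow> dv d x"
proof
  assume "dv d (x + nmul d w)"
  then obtain q where "x + nmul d w = nmul d q" by (auto simp: dv_def)
  then have "x = nmul d (q - w)" by (simp add: nmul_diff_right algebra_simps)
  then show "dv d x" by (auto simp: dv_def)
next
  assume "dv d x"
  then obtain q where "x = nmul d q" by (auto simp: dv_def)
  then have "x + nmul d w = nmul d (q + w)" by (simp add: nmul_add_right)
  then show "dv d (x + nmul d w)" by (auto simp: dv_def)
qed

lemma dv_shift_dvd: "d dvd D \<Longrightarrow> dv d (x + nmul D w) \<longleftrightarrow> dv d x"
proof -
  assume "d dvd D"
  then obtain k where "D = d * k" by auto
  then have "nmul D w = nmul d (nmul k w)" by (simp add: nmul_mult)
  then show ?thesis by (simp add: dv_shift)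
qed

lemma dv_scale:
  fixes x :: "'z::linordered_ab_group_add"
  assumes "m \<ge> 1"
  shows "dv (m * d) (nmul m x) \<longleftrightarrow> dv d x"
proof
  assume "dv (m * d) (nmul m x)"
  then obtain q where "nmul m x = nmul (m * d) q" by (auto simp: dv_def)
  then have "nmul m x = nmul m (nmul d q)" by (simp add: nmul_mult)
  then have "x = nmul d q" using nmul_inj[OF assms] by blast
  then show "dv d x" by (auto simp: dv_def)
next
  assume "dv d x"
  then obtain q where "x = nmul d q" by (auto simp: dv_def)
  then show "dv (m * d) (nmul m x)" by (auto simp: dv_def nmul_mult)
qed

lemma dv_0: "dv 0 x \<longleftrightarrow> x = 0" by (simp add: dv_def)

section \<open>Z-group facts\<close>

lemma zgroup_pos: "zgroup e \<Longrightarrow> 0 < e" by (simp add: zgroup_def)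
lemma zgroup_min: "zgroup e \<Longrightarrow> 0 < x \<Longrightarrow> e \<le> x" by (simp add: zgroup_def)

lemma zgroup_div:
  fixes e :: "'z::linordered_ab_group_add"
  assumes z: "zgroup e" and D: "D \<ge> 1"
  shows "\<exists>q j. j < D \<and> w = nmul D q + nmul j e"
proof -
  define R where "R = {(x::'z, y). \<exists>q. x - y = nmul D q}"
  have eqv: "equiv UNIV R"
  proof (rule equivI)
    show "refl R" by (rule refl_onI) (auto simp: R_def intro: exI[of _ 0])
    show "sym R"
    proof (rule symI)
      fix x y assume "(x, y) \<in> R"
      then obtain q where q: "x - y = nmul D q" unfolding R_def by auto
      have "y - x = - (x - y)" by simp
      also have "\<dots> = nmul D (- q)" using q by (simp add: nmul_minus)
      finally show "(y, x) \<in> R" unfolding R_def by auto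
    qed
    show "trans R"
    proof (rule transI)
      fix x y z assume "(x, y) \<in> R" "(y, z) \<in> R"
      then obtain q1 q2 where q: "x - y = nmul D q1" "y - z = nmul D q2" unfolding R_def by auto
      have "x - z = (x - y) + (y - z)" by simp
      also have "\<dots> = nmul D (q1 + q2)" using q by (simp add: nmul_add_right)
      finally show "(x, z) \<in> R" unfolding R_def by auto
    qed
  qed simp
  have card: "card (UNIV // R) = D" using z D unfolding zgroup_def R_def by blast
  then have fin: "finite (UNIV // R)" using D by (intro card_ge_0_finite) simp
  define h where "h j = R `` {nmul j e}" for j
  have inj: "inj_on h {..<D}"
  proof (rule inj_onI)
    fix i j assume i: "i \<in> {..<D}" and j: "j \<in> {..<D}" and hij: "h i = h j"
    have "(nmul i e, nmul j e) \<in> R" using hij eqv unfolding h_def by (simp add: equiv_class_eq_iff)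
    then obtain q where q: "nmul i e - nmul j e = nmul D q" unfolding R_def by auto
    show "i = j"
    proof (rule ccontr)
      assume "i \<noteq> j"
      have e0: "0 < e" using zgroup_pos[OF z] .
      show False
      proof (cases "j < i")
        case True
        have "nmul i e - nmul j e = nmul (i - j) e" using True by (simp add: nmul_sub)
        then have eq: "nmul (i - j) e = nmul D q" using q by simp
        have pos: "0 < nmul (i - j) e" using nmul_strict_mono_n[OF e0, of 0 "i-j"] True by simp
        have "0 < q"
        proof (rule ccontr)
          assume "\<not> 0 < q" then have "q \<le> 0" by simp
          then have "nmul D q \<le> 0" using nmul_mono[of q 0 D] by simp
          then show False using pos eq by simp
        qed
        then have "e \<le> q" using zgroup_min[OF z] by blast
        then have "nmul D e \<le> nmul D q" by (rule nmul_mono)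
        moreover have "nmul (i - j) e < nmul D e" using nmul_strict_mono_n[OF e0, of "i-j" D] i by simp
        ultimately show False using eq by simp
      next
        case False
        then have ji: "i < j" using \<open>i \<noteq> j\<close> by simp
        have "nmul j e - nmul i e = nmul (j - i) e" using ji by (simp add: nmul_sub)
        then have "nmul (j - i) e = - (nmul i e - nmul j e)" by simp
        then have eq: "nmul (j - i) e = nmul D (- q)" using q by (simp add: nmul_minus)
        have pos: "0 < nmul (j - i) e" using nmul_strict_mono_n[OF e0, of 0 "j-i"] ji by simp
        have "0 < - q"
        proof (rule ccontr)
          assume "\<not> 0 < - q" then have "- q \<le> 0" by simp
          then have "nmul D (- q) \<le> 0" using nmul_mono[of "-q" 0 D] by simp
          then show False using pos eq by simp
        qed
        then have "e \<le> - q" using zgroup_min[OF z] by blast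
        then have "nmul D e \<le> nmul D (- q)" by (rule nmul_mono)
        moreover have "nmul (j - i) e < nmul D e" using nmul_strict_mono_n[OF e0, of "j-i" D] j by simp
        ultimately show False using eq by simp
      qed
    qed
  qed
  have sub: "h ` {..<D} \<subseteq> UNIV // R" unfolding h_def by (auto intro: quotientI)
  have "card (h ` {..<D}) = D" using card_image[OF inj] by simp
  then have "h ` {..<D} = UNIV // R" using card_subset_eq[OF fin sub] card by simp
  moreover have "R `` {w} \<in> UNIV // R" by (auto intro: quotientI)
  ultimately obtain j where j: "j < D" "R `` {w} = h j" by auto
  then have "(w, nmul j e) \<in> R" using eqv unfolding h_def by (simp add: equiv_class_eq_iff)
  then obtain q where "w - nmul j e = nmul D q" unfolding R_def by auto
  then have "w = nmul D q + nmul j e" by (simp add: algebra_simps)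
  then show ?thesis using j by blast
qed

lemma zgroup_div_nonneg:
  fixes e :: "'z::linordered_ab_group_add"
  assumes z: "zgroup e" and D: "D \<ge> 1" and w: "0 \<le> w"
  shows "\<exists>q j. j < D \<and> w = nmul D q + nmul j e \<and> 0 \<le> q"
proof -
  obtain q j where j: "j < D" and wq: "w = nmul D q + nmul j e" using zgroup_div[OF z D] by blast
  have "0 \<le> q"
  proof (rule ccontr)
    assume "\<not> 0 \<le> q" then have "q < 0" by simp
    then have "0 < - q" by simp
    then have "e \<le> - q" using zgroup_min[OF z] by blast
    then have "nmul D e \<le> nmul D (- q)" by (rule nmul_mono)
    then have a: "nmul D q \<le> - nmul D e" by (simp add: nmul_minus le_minus_iff)
    have b: "nmul j e < nmul D e" using nmul_strict_mono_n[OF zgroup_pos[OF z] j] .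
    have "nmul D q + nmul j e < - nmul D e + nmul D e" using add_le_less_mono[OF a b] .
    then have "w < 0" using wq by simp
    then show False using w by simp
  qed
  then show ?thesis using j wq by blast
qed

definition cv :: "nat \<Rightarrow> 'z::ab_group_add lit \<Rightarrow> int" where
  "cv v L = fst (lterm L) v"

fun vsat :: "'z::linordered_ab_group_add lit \<Rightarrow> 'z \<Rightarrow> bool" where
  "vsat (LLe t) x = (x \<le> 0)"
| "vsat (LDv d t) x = dv d x"
| "vsat (LNDv d t) x = (\<not> dv d x)"

lemma lsat_vsat: "lsat N env L = vsat L (lval N env (lterm L))"
  by (cases L) auto

lemma vsat_lmap[simp]: "vsat (lmap f L) = vsat L"
  by (cases L) (auto simp: fun_eq_iff)

lemma lsat_decomp: "v < N \<Longrightarrow> lsat N (env(v := a)) L \<longleftrightarrow> vsat L (lval N env (tdrop v (lterm L)) + zmul (cv v L) a)"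
  by (simp add: lsat_vsat lval_decomp cv_def)

lemma vsat_shift: "lmod L dvd D \<Longrightarrow> (\<And>t. L \<noteq> LLe t) \<Longrightarrow> vsat L (x + nmul D w) = vsat L x"
  by (cases L) (auto simp: dv_shift_dvd)

lemma lit_shift:
  assumes v: "v < N" and d: "lmod L dvd D" and c: "\<And>t. L = LLe t \<Longrightarrow> cv v L = 0"
  shows "lsat N (env(v := a + nmul D w)) L \<longleftrightarrow> lsat N (env(v := a)) L"
proof (cases "\<exists>t. L = LLe t")
  case True
  then have "cv v L = 0" using c by blast
  then show ?thesis using lval_upd_coef0[OF v, of "lterm L" env "a + nmul D w" a] True
    by (auto simp: cv_def)
next
  case False
  have "zmul (cv v L) (a + nmul D w) = zmul (cv v L) a + nmul D (zmul (cv v L) w)"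
    by (simp add: zmul_add_right zmul_nmul)
  moreover have nL: "\<And>t. L \<noteq> LLe t" using False by auto
  ultimately show ?thesis using vsat_shift[OF d nL, of "lval N env (tdrop v (lterm L)) + zmul (cv v L) a" "zmul (cv v L) w"]
    by (simp add: lsat_decomp[OF v] add.assoc)
qed

definition lsubst :: "nat \<Rightarrow> 'z::ab_group_add lt \<Rightarrow> 'z lit \<Rightarrow> 'z lit" where
  "lsubst v u L = lmap (\<lambda>t. tadd (tdrop v t) (tscale (fst t v) u)) L"

lemma lsat_subst: "v < N \<Longrightarrow> lsat N env (lsubst v u L) \<longleftrightarrow> lsat N (env(v := lval N env u)) L"
  by (simp add: lsubst_def lsat_vsat lval_tadd lval_tscale lval_decomp)

lemma csat_subst: "v < N \<Longrightarrow> csat N env (map (lsubst v u) C) \<longleftrightarrow> csat N (env(v := lval N env u)) C"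
  by (simp add: csat_def lsat_subst)

definition is_lower :: "nat \<Rightarrow> 'z::ab_group_add lit \<Rightarrow> bool" where
  "is_lower v L \<longleftrightarrow> (\<exists>t. L = LLe t) \<and> cv v L = -1"
definition is_upper :: "nat \<Rightarrow> 'z::ab_group_add lit \<Rightarrow> bool" where
  "is_upper v L \<longleftrightarrow> (\<exists>t. L = LLe t) \<and> cv v L = 1"

definition absz :: "'z::linordered_ab_group_add \<Rightarrow> 'z" where "absz x = max x (- x)"
lemma absz_nonneg: "0 \<le> absz x" by (cases "0 \<le> x") (auto simp: absz_def le_max_iff_disj)
lemma le_absz: "x \<le> absz x" by (simp add: absz_def)

lemma lmod_dvd_prod: "L \<in> set C \<Longrightarrow> lmod L dvd prod_list (map lmod C)"
  by (induction C) auto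

lemma prod_list_pos: "(\<forall>L\<in>set C. lmod L \<ge> 1) \<Longrightarrow> prod_list (map lmod C) \<ge> 1"
  by (induction C) auto

definition cooper :: "'z::linordered_ab_group_add \<Rightarrow> nat \<Rightarrow> 'z lit list \<Rightarrow> 'z lit list list" where
  "cooper e v C = (let D = prod_list (map lmod C);
      ls = map (\<lambda>L. tdrop v (lterm L)) (filter (is_lower v) C) in
    if ls = [] then map (\<lambda>j. map (lsubst v (tconst (nmul j e))) (filter (\<lambda>L. \<not> is_upper v L) C)) [0..<D]
    else concat (map (\<lambda>s. map (\<lambda>j. map (lsubst v (tadd s (tconst (nmul j e)))) C) [0..<D]) ls))"

lemma cooper_correct:
  fixes e :: "'z::linordered_ab_group_add"
  assumes z: "zgroup e" and v: "v < N" and wf: "wfc C" and cs: "\<forall>L\<in>set C. cv v L \<in> {-1, 0, 1}"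
  shows "dsat N env (cooper e v C) \<longleftrightarrow> (\<exists>y. csat N (env(v := y)) C)"
proof -
  define D where "D = prod_list (map lmod C)"
  define ls where "ls = map (\<lambda>L. tdrop v (lterm L)) (filter (is_lower v) C)"
  have D1: "D \<ge> 1" unfolding D_def using wf prod_list_pos unfolding wfc_def by blast
  have Ddvd: "\<And>L. L \<in> set C \<Longrightarrow> lmod L dvd D" unfolding D_def by (rule lmod_dvd_prod)
  have e0: "0 < e" using zgroup_pos[OF z] .
  show ?thesis
  proof (cases "ls = []")
    case True
    then have nolow: "\<And>L. L \<in> set C \<Longrightarrow> \<not> is_lower v L" unfolding ls_def by (auto simp: filter_empty_conv)
    have co: "cooper e v C = map (\<lambda>j. map (lsubst v (tconst (nmul j e))) (filter (\<lambda>L. \<not> is_upper v L) C)) [0..<D]"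
      using True unfolding cooper_def D_def ls_def Let_def by simp
    have shiftok: "\<And>L a w. L \<in> set C \<Longrightarrow> \<not> is_upper v L \<Longrightarrow> lsat N (env(v := a + nmul D w)) L \<longleftrightarrow> lsat N (env(v := a)) L"
    proof -
      fix L a w assume L: "L \<in> set C" "\<not> is_upper v L"
      show "lsat N (env(v := a + nmul D w)) L \<longleftrightarrow> lsat N (env(v := a)) L"
      proof (rule lit_shift[OF v Ddvd[OF L(1)]])
        fix t assume "L = LLe t"
        then show "cv v L = 0" using L nolow[OF L(1)] cs unfolding is_lower_def is_upper_def by auto
      qed
    qed
    show ?thesis
    proof
      assume "dsat N env (cooper e v C)"
      then obtain j where j: "j < D" and cj: "csat N (env(v := nmul j e)) (filter (\<lambda>L. \<not> is_upper v L) C)"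
        unfolding co dsat_def by (auto simp: csat_subst[OF v])
      define ups where "ups = map (\<lambda>L. lval N env (tdrop v (lterm L))) (filter (is_upper v) C)"
      define Q where "Q = sum_list (map absz (nmul j e # ups))"
      have Q0: "0 \<le> Q" unfolding Q_def by (rule sum_list_nonneg) (auto simp: absz_nonneg)
      have "csat N (env(v := nmul j e + nmul D (- Q))) C"
        unfolding csat_def
      proof
        fix L assume L: "L \<in> set C"
        show "lsat N (env(v := nmul j e + nmul D (- Q))) L"
        proof (cases "is_upper v L")
          case False
          then show ?thesis using shiftok[OF L False] cj L unfolding csat_def by auto
        next
          case True
          define r where "r = lval N env (tdrop v (lterm L))"
          have rin: "absz r \<in> set (map absz ups)" unfolding ups_def r_def using L True by auto
          have "absz r \<le> sum_list (map absz ups)"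
            by (rule member_le_sum_list[OF rin]) (auto simp: absz_nonneg)
          then have "r + nmul j e \<le> Q" unfolding Q_def
            using le_absz[of r] le_absz[of "nmul j e"] by (simp add: add_mono add.commute)
          also have "Q \<le> nmul D Q" using nmul_ge_self[OF Q0 D1] .
          finally have "r + (nmul j e + nmul D (- Q)) \<le> 0" by (simp add: nmul_minus algebra_simps)
          moreover have "cv v L = 1" "\<exists>t. L = LLe t" using True unfolding is_upper_def by auto
          ultimately show ?thesis unfolding r_def by (auto simp: lsat_decomp[OF v])
        qed
      qed
      then show "\<exists>y. csat N (env(v := y)) C" by blast
    next
      assume "\<exists>y. csat N (env(v := y)) C"
      then obtain y where y: "csat N (env(v := y)) C" by blast
      obtain q j where j: "j < D" and yq: "y = nmul D q + nmul j e" using zgroup_div[OF z D1] by blast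
      have "csat N (env(v := nmul j e)) (filter (\<lambda>L. \<not> is_upper v L) C)"
        unfolding csat_def
      proof
        fix L assume "L \<in> set (filter (\<lambda>L. \<not> is_upper v L) C)"
        then have L: "L \<in> set C" "\<not> is_upper v L" by auto
        have "lsat N (env(v := nmul j e + nmul D q)) L" using y L yq unfolding csat_def by (auto simp: add.commute)
        then show "lsat N (env(v := nmul j e)) L" using shiftok[OF L] by blast
      qed
      then show "dsat N env (cooper e v C)" unfolding co dsat_def using j
        by (auto simp: csat_subst[OF v] intro!: bexI[of _ j])
    qed
  next
    case False
    have co: "cooper e v C = concat (map (\<lambda>s. map (\<lambda>j. map (lsubst v (tadd s (tconst (nmul j e)))) C) [0..<D]) ls)"
      using False unfolding cooper_def D_def ls_def Let_def by simp
    show ?thesis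
    proof
      assume "dsat N env (cooper e v C)"
      then obtain s j where "csat N env (map (lsubst v (tadd s (tconst (nmul j e)))) C)"
        unfolding co dsat_def by auto
      then show "\<exists>y. csat N (env(v := y)) C" by (auto simp: csat_subst[OF v])
    next
      assume "\<exists>y. csat N (env(v := y)) C"
      then obtain y where y: "csat N (env(v := y)) C" by blast
      define M where "M = Max (lval N env ` set ls)"
      have finls: "finite (lval N env ` set ls)" by simp
      have nel: "lval N env ` set ls \<noteq> {}" using False by simp
      obtain s0 where s0: "s0 \<in> set ls" "lval N env s0 = M"
        using Max_in[OF finls nel] unfolding M_def by auto
      have lowb: "\<And>L. L \<in> set C \<Longrightarrow> is_lower v L \<Longrightarrow> lval N env (tdrop v (lterm L)) \<le> M"
        unfolding M_def ls_def by (rule Max_ge) auto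
      have My: "M \<le> y"
      proof -
        obtain L where L: "L \<in> set C" "is_lower v L" "s0 = tdrop v (lterm L)" using s0(1) unfolding ls_def by auto
        have "lsat N (env(v := y)) L" using y L unfolding csat_def by auto
        then have "lval N env s0 - y \<le> 0" using L unfolding is_lower_def
          by (auto simp: lsat_decomp[OF v] zmul_neg)
        then show ?thesis using s0(2) by simp
      qed
      obtain q j where j: "j < D" and yq: "y - M = nmul D q + nmul j e" and q0: "0 \<le> q"
        using zgroup_div_nonneg[OF z D1, of "y - M"] My by auto
      define y' where "y' = M + nmul j e"
      have yy: "y = y' + nmul D q" unfolding y'_def using yq by (simp add: algebra_simps)
      have Dq0: "0 \<le> nmul D q" using nmul_nonneg[OF q0] .
      have "csat N (env(v := y')) C"
        unfolding csat_def
      proof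
        fix L assume L: "L \<in> set C"
        show "lsat N (env(v := y')) L"
        proof (cases "is_upper v L")
          case True
          have "lsat N (env(v := y)) L" using y L unfolding csat_def by auto
          then have "lval N env (tdrop v (lterm L)) + y \<le> 0" using True unfolding is_upper_def
            by (auto simp: lsat_decomp[OF v])
          moreover have "lval N env (tdrop v (lterm L)) + y' \<le> lval N env (tdrop v (lterm L)) + y"
            using yy Dq0 by simp
          ultimately have "lval N env (tdrop v (lterm L)) + y' \<le> 0" by (rule order_trans[rotated])
          then show ?thesis using True unfolding is_upper_def by (auto simp: lsat_decomp[OF v])
        next
          case nu: False
          show ?thesis
          proof (cases "is_lower v L")
            case True
            have "lval N env (tdrop v (lterm L)) \<le> M" using lowb[OF L True] .
            also have "M \<le> y'" unfolding y'_def using nmul_nonneg[of e j] e0 by simp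
            finally have "lval N env (tdrop v (lterm L)) - y' \<le> 0" by simp
            then show ?thesis using True unfolding is_lower_def by (auto simp: lsat_decomp[OF v] zmul_neg)
          next
            case False
            have "lsat N (env(v := y' + nmul D q)) L \<longleftrightarrow> lsat N (env(v := y')) L"
            proof (rule lit_shift[OF v Ddvd[OF L]])
              fix t assume "L = LLe t"
              then show "cv v L = 0" using L False nu cs unfolding is_lower_def is_upper_def by auto
            qed
            then show ?thesis using y L yy unfolding csat_def by auto
          qed
        qed
      qed
      moreover have "lval N env (tadd s0 (tconst (nmul j e))) = y'" unfolding y'_def by (simp add: lval_tadd s0(2))
      ultimately have "csat N env (map (lsubst v (tadd s0 (tconst (nmul j e)))) C)"
        by (simp add: csat_subst[OF v])
      then show "dsat N env (cooper e v C)" unfolding co dsat_def using s0(1) j by force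
    qed
  qed
qed

fun lscale :: "nat \<Rightarrow> 'z::ab_group_add lit \<Rightarrow> 'z lit" where
  "lscale m (LLe t) = LLe (tscale (int m) t)"
| "lscale m (LDv d t) = LDv (m * d) (tscale (int m) t)"
| "lscale m (LNDv d t) = LNDv (m * d) (tscale (int m) t)"

definition lsetc :: "nat \<Rightarrow> int \<Rightarrow> 'z::ab_group_add lit \<Rightarrow> 'z lit" where
  "lsetc v c L = lmap (\<lambda>t. ((fst t)(v := c), snd t)) L"

definition normL :: "nat \<Rightarrow> nat \<Rightarrow> 'z::ab_group_add lit \<Rightarrow> 'z lit" where
  "normL v l L = (if cv v L = 0 then L else lsetc v (sgn (cv v L)) (lscale (l div nat \<bar>cv v L\<bar>) L))"

definition lcmv :: "nat \<Rightarrow> 'z::ab_group_add lit list \<Rightarrow> nat" where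
  "lcmv v C = (\<Prod>L\<in>{L \<in> set C. cv v L \<noteq> 0}. nat \<bar>cv v L\<bar>)"

definition normC :: "nat \<Rightarrow> 'z::ab_group_add lit list \<Rightarrow> 'z lit list" where
  "normC v C = LDv (lcmv v C) (tvar v) # map (normL v (lcmv v C)) C"

lemma lcmv_pos: "lcmv v C \<ge> 1"
proof -
  have "0 < lcmv v C" unfolding lcmv_def by (rule prod_pos) auto
  then show ?thesis by simp
qed

lemma lcmv_dvd: "L \<in> set C \<Longrightarrow> cv v L \<noteq> 0 \<Longrightarrow> nat \<bar>cv v L\<bar> dvd lcmv v C"
  unfolding lcmv_def by (rule dvd_prodI) auto

lemma lterm_lscale: "lterm (lscale m L) = tscale (int m) (lterm L)"
  by (cases L) auto

lemma lmod_lscale: "m \<ge> 1 \<Longrightarrow> lmod L \<ge> 1 \<Longrightarrow> lmod (lscale m L) \<ge> 1"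
  by (cases L) auto

lemma vsat_lscale:
  fixes x :: "'z::linordered_ab_group_add"
  assumes "m \<ge> 1"
  shows "vsat (lscale m L) (nmul m x) = vsat L x"
proof -
  have "nmul m x \<le> 0 \<longleftrightarrow> x \<le> 0" using nmul_le_iff[OF assms, of x 0] by simp
  then show ?thesis using dv_scale[OF assms] by (cases L) auto
qed

lemma normL_sat:
  fixes z :: "'z::linordered_ab_group_add"
  assumes v: "v < N" and L: "L \<in> set C"
  shows "lsat N (env(v := nmul (lcmv v C) z)) (normL v (lcmv v C) L) \<longleftrightarrow> lsat N (env(v := z)) L"
proof (cases "cv v L = 0")
  case True
  have "lval N (env(v := nmul (lcmv v C) z)) (lterm L) = lval N (env(v := z)) (lterm L)"
    by (rule lval_upd_coef0[OF v]) (use True in \<open>simp add: cv_def\<close>)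
  then show ?thesis unfolding normL_def using True by (simp add: lsat_vsat)
next
  case False
  define c where "c = cv v L"
  define l where "l = lcmv v C"
  define m where "m = l div nat \<bar>c\<bar>"
  have dvd: "nat \<bar>c\<bar> dvd l" unfolding c_def l_def using lcmv_dvd[OF L False] .
  have ml: "m * nat \<bar>c\<bar> = l" unfolding m_def using dvd by simp
  have l1: "l \<ge> 1" unfolding l_def by (rule lcmv_pos)
  have m1: "m \<ge> 1" using ml l1 by (cases m) auto
  have mc: "int m * c = sgn c * int l"
  proof -
    have "int l = int m * \<bar>c\<bar>" using ml False unfolding c_def by (metis abs_ge_zero int_nat_eq of_nat_mult)
    then show ?thesis by (simp add: mult_sgn_abs algebra_simps flip: abs_mult_sgn)
  qed
  define t where "t = lterm L"
  define r where "r = lval N env (tdrop v t)"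
  have td: "tdrop v (((fst (tscale (int m) t))(v := sgn c)), snd (tscale (int m) t)) = tscale (int m) (tdrop v t)"
    by (simp add: tdrop_def tscale_def fun_eq_iff)
  have "lterm (normL v l L) = (((fst (tscale (int m) t))(v := sgn c)), snd (tscale (int m) t))"
    using False unfolding normL_def lsetc_def c_def m_def t_def by (simp add: lterm_lscale)
  then have "lval N (env(v := nmul l z)) (lterm (normL v l L)) = zmul (int m) r + zmul (sgn c) (nmul l z)"
    by (simp add: lval_decomp[OF v] td lval_tscale r_def)
  also have "\<dots> = zmul (int m) r + zmul (int m * c) z"
    by (simp add: mc zmul_mult)
  also have "\<dots> = nmul m (lval N (env(v := z)) t)"
    by (simp add: lval_decomp[OF v] r_def c_def cv_def t_def zmul_mult zmul_add_right nmul_add_right)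
  finally have val: "lval N (env(v := nmul l z)) (lterm (normL v l L)) = nmul m (lval N (env(v := z)) t)" .
  have "vsat (normL v l L) = vsat (lscale m L)"
    using False unfolding normL_def lsetc_def c_def m_def by simp
  then show ?thesis unfolding l_def[symmetric] using val vsat_lscale[OF m1, of L]
    by (simp add: lsat_vsat t_def)
qed

lemma normC_correct:
  fixes env :: "nat \<Rightarrow> 'z::linordered_ab_group_add"
  assumes v: "v < N"
  shows "(\<exists>z. csat N (env(v := z)) C) \<longleftrightarrow> (\<exists>y. csat N (env(v := y)) (normC v C))"
proof
  assume "\<exists>z. csat N (env(v := z)) C"
  then obtain z where z: "csat N (env(v := z)) C" by blast
  have "\<forall>L\<in>set C. lsat N (env(v := nmul (lcmv v C) z)) (normL v (lcmv v C) L)"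
  proof
    fix L assume L: "L \<in> set C"
    from normL_sat[OF v L, of env z] z L show "lsat N (env(v := nmul (lcmv v C) z)) (normL v (lcmv v C) L)"
      by (simp add: csat_def)
  qed
  then have "csat N (env(v := nmul (lcmv v C) z)) (normC v C)"
    unfolding normC_def csat_def by (auto simp: lval_tvar[OF v] dv_def)
  then show "\<exists>y. csat N (env(v := y)) (normC v C)" by blast
next
  assume "\<exists>y. csat N (env(v := y)) (normC v C)"
  then obtain y where y: "csat N (env(v := y)) (normC v C)" by blast
  then have "dv (lcmv v C) y" unfolding normC_def csat_def by (simp add: lval_tvar[OF v])
  then obtain q where q: "y = nmul (lcmv v C) q" unfolding dv_def by blast
  have "csat N (env(v := q)) C"
    unfolding csat_def
  proof
    fix L assume L: "L \<in> set C"
    have "lsat N (env(v := nmul (lcmv v C) q)) (normL v (lcmv v C) L)"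
      using y L unfolding normC_def csat_def q by auto
    then show "lsat N (env(v := q)) L" using normL_sat[OF v L, of env q] by simp
  qed
  then show "\<exists>z. csat N (env(v := z)) C" by blast
qed

lemma normL_lmod: "L \<in> set C \<Longrightarrow> lmod L \<ge> 1 \<Longrightarrow> lmod (normL v (lcmv v C) L) \<ge> 1"
proof (cases "cv v L = 0")
  case True then show "lmod L \<ge> 1 \<Longrightarrow> ?thesis" by (simp add: normL_def)
next
  case False
  assume H: "L \<in> set C" "lmod L \<ge> 1"
  have "nat \<bar>cv v L\<bar> dvd lcmv v C" using lcmv_dvd[OF H(1) False] .
  then have "lcmv v C div nat \<bar>cv v L\<bar> * nat \<bar>cv v L\<bar> = lcmv v C" by simp
  then have "lcmv v C div nat \<bar>cv v L\<bar> \<ge> 1" using lcmv_pos[of v C] by (cases "lcmv v C div nat \<bar>cv v L\<bar>") auto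
  then show ?thesis using H(2) False lmod_lscale by (simp add: normL_def lsetc_def)
qed

lemma normC_wf: "wfc C \<Longrightarrow> wfc (normC v C)"
  unfolding wfc_def normC_def using normL_lmod lcmv_pos by auto

lemma normC_cs: "\<forall>L\<in>set (normC v C). cv v L \<in> {-1, 0, 1}"
  unfolding normC_def normL_def lsetc_def
  by (auto simp: cv_def tvar_def sgn_if split: if_splits)

definition elimC :: "'z::linordered_ab_group_add \<Rightarrow> nat \<Rightarrow> 'z lit list \<Rightarrow> 'z lit list list" where
  "elimC e v C = cooper e v (normC v C)"

lemma lmod_lsubst[simp]: "lmod (lsubst v u L) = lmod L"
  by (simp add: lsubst_def)

lemma cooper_wf: "wfc C \<Longrightarrow> wfd (cooper e v C)"
  unfolding cooper_def Let_def wfd_def wfc_def by auto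

lemma elimC_correct:
  fixes e :: "'z::linordered_ab_group_add"
  assumes z: "zgroup e" and v: "v < N" and wf: "wfc C"
  shows "dsat N env (elimC e v C) \<longleftrightarrow> (\<exists>y. csat N (env(v := y)) C)"
  unfolding elimC_def using cooper_correct[OF z v normC_wf[OF wf] normC_cs] normC_correct[OF v, of env C] by simp

definition delim :: "'z::linordered_ab_group_add \<Rightarrow> nat \<Rightarrow> 'z lit list list \<Rightarrow> 'z lit list list" where
  "delim e v F = concat (map (elimC e v) F)"

lemma delim_correct:
  fixes e :: "'z::linordered_ab_group_add"
  assumes z: "zgroup e" and v: "v < N" and wf: "wfd F"
  shows "dsat N env (delim e v F) \<longleftrightarrow> (\<exists>y. dsat N (env(v := y)) F)"
proof -
  have "dsat N env (delim e v F) \<longleftrightarrow> (\<exists>C\<in>set F. dsat N env (elimC e v C))"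
    unfolding delim_def dsat_def by auto
  also have "\<dots> \<longleftrightarrow> (\<exists>C\<in>set F. \<exists>y. csat N (env(v := y)) C)"
    using elimC_correct[OF z v] wf unfolding wfd_def by blast
  also have "\<dots> \<longleftrightarrow> (\<exists>y. dsat N (env(v := y)) F)" unfolding dsat_def by blast
  finally show ?thesis .
qed

lemma delim_wf: "wfd F \<Longrightarrow> wfd (delim e v F)"
  unfolding delim_def elimC_def wfd_def using cooper_wf normC_wf unfolding wfd_def by fastforce

fun neg_lit :: "'z::ab_group_add \<Rightarrow> 'z lit \<Rightarrow> 'z lit" where
  "neg_lit e (LLe t) = LLe (tadd (tscale (-1) t) (tconst e))"
| "neg_lit e (LDv d t) = LNDv d t"
| "neg_lit e (LNDv d t) = LDv d t"

lemma neg_lit_sat: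
  fixes e :: "'z::linordered_ab_group_add"
  assumes z: "zgroup e"
  shows "lsat N env (neg_lit e L) \<longleftrightarrow> \<not> lsat N env L"
proof (cases L)
  case (LLe t)
  have "(- lval N env t + e \<le> 0) \<longleftrightarrow> \<not> lval N env t \<le> 0"
  proof
    assume "- lval N env t + e \<le> 0"
    then have "e \<le> lval N env t" by (simp add: algebra_simps)
    then show "\<not> lval N env t \<le> 0" using zgroup_pos[OF z] by simp
  next
    assume "\<not> lval N env t \<le> 0"
    then have "e \<le> lval N env t" using zgroup_min[OF z] by simp
    then show "- lval N env t + e \<le> 0" by (simp add: algebra_simps)
  qed
  then show ?thesis using LLe by (simp add: lval_tadd lval_tscale zmul_neg)
qed auto

lemma lmod_neg_lit[simp]: "lmod (neg_lit e L) = lmod L"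
  by (cases L) auto

definition dconj :: "'z lit list list \<Rightarrow> 'z lit list list \<Rightarrow> 'z lit list list" where
  "dconj F G = concat (map (\<lambda>C. map (\<lambda>D. C @ D) G) F)"

lemma dconj_sat: "dsat N env (dconj F G) \<longleftrightarrow> dsat N env F \<and> dsat N env G"
  unfolding dconj_def dsat_def csat_def by auto

lemma dconj_wf: "wfd F \<Longrightarrow> wfd G \<Longrightarrow> wfd (dconj F G)"
  unfolding dconj_def wfd_def wfc_def by auto

fun dneg :: "'z::ab_group_add \<Rightarrow> 'z lit list list \<Rightarrow> 'z lit list list" where
  "dneg e [] = [[]]"
| "dneg e (C # F) = dconj (map (\<lambda>L. [neg_lit e L]) C) (dneg e F)"

lemma dneg_sat:
  fixes e :: "'z::linordered_ab_group_add"
  assumes z: "zgroup e"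
  shows "dsat N env (dneg e F) \<longleftrightarrow> \<not> dsat N env F"
proof (induction F)
  case Nil then show ?case by (simp add: dsat_def csat_def)
next
  case (Cons C F)
  have "dsat N env (map (\<lambda>L. [neg_lit e L]) C) \<longleftrightarrow> \<not> csat N env C"
    unfolding dsat_def csat_def using neg_lit_sat[OF z] by auto
  moreover have "dsat N env (dneg e (C # F)) \<longleftrightarrow> dsat N env (map (\<lambda>L. [neg_lit e L]) C) \<and> dsat N env (dneg e F)"
    by (simp add: dconj_sat)
  ultimately show ?case using Cons by (simp add: dsat_def)
qed

lemma dneg_wf: "wfd F \<Longrightarrow> wfd (dneg e F)"
proof (induction F)
  case Nil then show ?case by (simp add: wfd_def wfc_def)
next
  case (Cons C F)
  have "wfd (map (\<lambda>L. [neg_lit e L]) C)" using Cons.prems unfolding wfd_def wfc_def by auto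
  moreover have "wfd F" using Cons.prems by (simp add: wfd_def)
  ultimately show ?case using dconj_wf Cons.IH by simp
qed

primrec tvs :: "'z pterm \<Rightarrow> nat set" where
  "tvs (PVar i) = {i}" | "tvs (PPar c) = {}" | "tvs PZero = {}" | "tvs POne = {}"
| "tvs (PPlus s t) = tvs s \<union> tvs t"

primrec fvs :: "'z pform \<Rightarrow> nat set" where
  "fvs (PEq s t) = tvs s \<union> tvs t" | "fvs (PLe s t) = tvs s \<union> tvs t"
| "fvs (PCong n s t) = tvs s \<union> tvs t" | "fvs (PNeg \<phi>) = fvs \<phi>"
| "fvs (PConj \<phi> \<psi>) = fvs \<phi> \<union> fvs \<psi>" | "fvs (PEx i \<phi>) = insert i (fvs \<phi>)"

lemma finite_tvs: "finite (tvs t)" by (induction t) auto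
lemma finite_fvs: "finite (fvs \<phi>)" by (induction \<phi>) (auto simp: finite_tvs)

primrec tr :: "'z::ab_group_add \<Rightarrow> 'z pterm \<Rightarrow> 'z lt" where
  "tr e (PVar i) = tvar i" | "tr e (PPar c) = tconst c" | "tr e PZero = tconst 0"
| "tr e POne = tconst e" | "tr e (PPlus s t) = tadd (tr e s) (tr e t)"

lemma lval_tr: "tvs t \<subseteq> {..<N} \<Longrightarrow> lval N env (tr e t) = tval e env t"
  by (induction t) (auto simp: lval_tvar lval_tadd)

definition tsub :: "'z::ab_group_add lt \<Rightarrow> 'z lt \<Rightarrow> 'z lt" where
  "tsub s t = tadd s (tscale (-1) t)"

lemma lval_tsub: "lval N env (tsub s t) = lval N env s - lval N env t"
  by (simp add: tsub_def lval_tadd lval_tscale zmul_neg)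

theorem qe:
  fixes e :: "'z::linordered_ab_group_add"
  assumes z: "zgroup e"
  shows "fvs \<phi> \<subseteq> {..<N} \<Longrightarrow> \<exists>F. wfd F \<and> (\<forall>env. psat e env \<phi> \<longleftrightarrow> dsat N env F)"
proof (induction \<phi>)
  case (PEq s t)
  let ?F = "[[LLe (tsub (tr e s) (tr e t)), LLe (tsub (tr e t) (tr e s))]]"
  have "wfd ?F" by (simp add: wfd_def wfc_def)
  moreover have "\<forall>env. psat e env (PEq s t) \<longleftrightarrow> dsat N env ?F"
    using PEq by (auto simp: dsat_def csat_def lval_tsub lval_tr)
  ultimately show ?case by blast
next
  case (PLe s t)
  let ?F = "[[LLe (tsub (tr e s) (tr e t))]]"
  have "wfd ?F" by (simp add: wfd_def wfc_def)
  moreover have "\<forall>env. psat e env (PLe s t) \<longleftrightarrow> dsat N env ?F"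
    using PLe by (auto simp: dsat_def csat_def lval_tsub lval_tr)
  ultimately show ?case by blast
next
  case (PCong n s t)
  show ?case
  proof (cases "n = 0")
    case True
    let ?F = "[[LLe (tsub (tr e s) (tr e t)), LLe (tsub (tr e t) (tr e s))]]"
    have "wfd ?F" by (simp add: wfd_def wfc_def)
    moreover have "\<forall>env. psat e env (PCong n s t) \<longleftrightarrow> dsat N env ?F"
      using PCong True by (auto simp: dsat_def csat_def lval_tsub lval_tr)
    ultimately show ?thesis by blast
  next
    case False
    let ?F = "[[LDv n (tsub (tr e s) (tr e t))]]"
    have "wfd ?F" using False by (simp add: wfd_def wfc_def)
    moreover have "\<forall>env. psat e env (PCong n s t) \<longleftrightarrow> dsat N env ?F"
      using PCong by (auto simp: dsat_def csat_def lval_tsub lval_tr dv_def)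
    ultimately show ?thesis by blast
  qed
next
  case (PNeg \<phi>)
  then obtain F where F: "wfd F" "\<forall>env. psat e env \<phi> \<longleftrightarrow> dsat N env F" by auto
  show ?case using dneg_wf[OF F(1)] dneg_sat[OF z] F(2) by (intro exI[of _ "dneg e F"]) auto
next
  case (PConj \<phi> \<psi>)
  then obtain F G where F: "wfd F" "\<forall>env. psat e env \<phi> \<longleftrightarrow> dsat N env F"
    and G: "wfd G" "\<forall>env. psat e env \<psi> \<longleftrightarrow> dsat N env G" by auto
  show ?case using dconj_wf[OF F(1) G(1)] dconj_sat F(2) G(2) by (intro exI[of _ "dconj F G"]) auto
next
  case (PEx i \<phi>)
  then have i: "i < N" by auto
  obtain F where F: "wfd F" "\<forall>env. psat e env \<phi> \<longleftrightarrow> dsat N env F" using PEx by auto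
  show ?case using delim_wf[OF F(1)] delim_correct[OF z i F(1)] F(2) by (intro exI[of _ "delim e i F"]) auto
qed

section \<open>Bounds from uniqueness\<close>

definition B1 :: "'z::linordered_ab_group_add lit list list \<Rightarrow> 'z" where
  "B1 F = sum_list (map (\<lambda>L. absz (snd (lterm L))) (concat F))"
definition B2 :: "nat \<Rightarrow> 'z::ab_group_add lit list list \<Rightarrow> nat" where
  "B2 N F = sum_list (map (\<lambda>L. \<Sum>i<N. nat \<bar>fst (lterm L) i\<bar>) (concat F))"

lemma B1_nonneg: "0 \<le> B1 F"
  unfolding B1_def by (rule sum_list_nonneg) (auto simp: absz_nonneg)

lemma zmul_nonpos: "c \<le> 0 \<Longrightarrow> 0 \<le> (x::'z::linordered_ab_group_add) \<Longrightarrow> zmul c x \<le> 0"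
  by (cases "c = 0") (auto simp: zmul_def nmul_nonneg)

lemma bound_lemma:
  fixes e :: "'z::linordered_ab_group_add" and zz S :: 'z and env :: "nat \<Rightarrow> 'z"
  assumes z: "zgroup e" and N: "0 < N" and wf: "wfd F"
    and envb: "\<And>i. i \<noteq> 0 \<Longrightarrow> 0 \<le> env i \<and> env i \<le> S"
    and uniq: "\<And>z'. dsat N (env(0 := z')) F \<Longrightarrow> z' = zz"
    and sat: "dsat N (env(0 := zz)) F"
    and S0: "0 \<le> S"
  shows "zz \<le> B1 F + nmul (B2 N F) S"
proof -
  have bnd0: "0 \<le> B1 F + nmul (B2 N F) S" using add_nonneg_nonneg[OF B1_nonneg nmul_nonneg[OF S0]] .
  obtain C where C: "C \<in> set F" "csat N (env(0 := zz)) C" using sat unfolding dsat_def by blast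
  show ?thesis
  proof (cases "\<exists>t. LLe t \<in> set C \<and> fst t 0 > 0")
    case True
    then obtain t where t: "LLe t \<in> set C" "fst t 0 > 0" by blast
    define k where "k = (fst t)(0 := 0)"
    have lt: "lval N (env(0 := zz)) t \<le> 0" using C(2) t(1) unfolding csat_def by fastforce
    have ld: "lval N env (tdrop 0 t) = snd t + (\<Sum>i<N. zmul (k i) (env i))"
      by (simp add: lval_def tdrop_def k_def)
    have lt2: "snd t + (\<Sum>i<N. zmul (k i) (env i)) + zmul (fst t 0) zz \<le> 0"
      using lt lval_decomp[OF N, of env zz t] ld by simp
    show ?thesis
    proof (cases "zz \<le> 0")
      case True then show ?thesis using bnd0 by simp
    next
      case False
      then have zpos: "0 \<le> zz" by simp
      have "zz \<le> nmul (nat (fst t 0)) zz" using nmul_ge_self[OF zpos] t(2) by simp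
      also have "\<dots> = zmul (fst t 0) zz" using t(2) by (simp add: zmul_def)
      also have "\<dots> \<le> - snd t + (\<Sum>i<N. zmul (- k i) (env i))"
      proof -
        have sn: "(\<Sum>i<N. zmul (- k i) (env i)) = - (\<Sum>i<N. zmul (k i) (env i))"
          by (simp add: zmul_neg sum_negf)
        have "snd t + (\<Sum>i<N. zmul (k i) (env i)) + zmul (fst t 0) zz - (snd t + (\<Sum>i<N. zmul (k i) (env i)))
              \<le> 0 - (snd t + (\<Sum>i<N. zmul (k i) (env i)))" using lt2 by (rule diff_right_mono)
        then show ?thesis unfolding sn by (simp add: algebra_simps)
      qed
      also have "\<dots> \<le> absz (snd t) + (\<Sum>i<N. nmul (nat \<bar>fst t i\<bar>) S)"
      proof (rule add_mono)
        show "- snd t \<le> absz (snd t)" by (simp add: absz_def)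
        show "(\<Sum>i<N. zmul (- k i) (env i)) \<le> (\<Sum>i<N. nmul (nat \<bar>fst t i\<bar>) S)"
        proof (rule sum_mono)
          fix i assume "i \<in> {..<N}"
          show "zmul (- k i) (env i) \<le> nmul (nat \<bar>fst t i\<bar>) S"
          proof (cases "i = 0")
            case True then show ?thesis using nmul_nonneg[OF S0] by (simp add: k_def)
          next
            case False
            have "zmul (- k i) (env i) \<le> nmul (nat \<bar>- k i\<bar>) (max (env i) (- env i))" by (rule zmul_abs_le)
            also have "max (env i) (- env i) = env i" using envb[OF False] by (auto simp: max_def intro: antisym)
            also have "nmul (nat \<bar>- k i\<bar>) (env i) \<le> nmul (nat \<bar>fst t i\<bar>) S"
              using envb[OF False] False by (simp add: k_def nmul_mono)
            finally show ?thesis .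
          qed
        qed
      qed
      also have "\<dots> = absz (snd t) + nmul (\<Sum>i<N. nat \<bar>fst t i\<bar>) S"
      proof -
        have "(\<Sum>i<N. nmul (nat \<bar>fst t i\<bar>) S) = nmul (\<Sum>i<N. nat \<bar>fst t i\<bar>) S"
          by (induction N) (simp_all add: nmul_add)
        then show ?thesis by simp
      qed
      also have "\<dots> \<le> B1 F + nmul (B2 N F) S"
      proof (rule add_mono)
        have "LLe t \<in> set (concat F)" using C(1) t(1) by auto
        then have "absz (snd t) \<in> set (map (\<lambda>L. absz (snd (lterm L))) (concat F))" by force
        then show "absz (snd t) \<le> B1 F" unfolding B1_def
          by (intro member_le_sum_list) (auto simp: absz_nonneg)
        have "(\<Sum>i<N. nat \<bar>fst t i\<bar>) \<in> set (map (\<lambda>L. \<Sum>i<N. nat \<bar>fst (lterm L) i\<bar>) (concat F))"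
          using \<open>LLe t \<in> set (concat F)\<close> by force
        then have "(\<Sum>i<N. nat \<bar>fst t i\<bar>) \<le> B2 N F" unfolding B2_def by (simp add: member_le_sum_list)
        then show "nmul (\<Sum>i<N. nat \<bar>fst t i\<bar>) S \<le> nmul (B2 N F) S" by (rule nmul_mono_n[OF S0])
      qed
      finally show ?thesis .
    qed
  next
    case False
    define P where "P = prod_list (map lmod C)"
    have P1: "P \<ge> 1" unfolding P_def using wf C(1) prod_list_pos unfolding wfd_def wfc_def by blast
    have e0: "0 < e" using zgroup_pos[OF z] .
    have Pe: "0 < nmul P e" using nmul_strict_mono_n[OF e0, of 0 P] P1 by simp
    have "csat N (env(0 := zz + nmul P e)) C"
      unfolding csat_def
    proof
      fix L assume L: "L \<in> set C"
      show "lsat N (env(0 := zz + nmul P e)) L"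
      proof (cases "\<exists>t. L = LLe t")
        case True
        then obtain t where Lt: "L = LLe t" by blast
        have c: "fst t 0 \<le> 0"
        proof (rule ccontr)
          assume "\<not> fst t 0 \<le> 0"
          then have "LLe t \<in> set C \<and> fst t 0 > 0" using L Lt by simp
          then show False using False by blast
        qed
        have "lval N (env(0 := zz)) t \<le> 0" using C(2) L Lt unfolding csat_def by fastforce
        moreover have "zmul (fst t 0) (nmul P e) \<le> 0" using zmul_nonpos[OF c, of "nmul P e"] Pe by simp
        ultimately have "lval N (env(0 := zz)) t + zmul (fst t 0) (nmul P e) \<le> 0" by (simp add: add_nonpos_nonpos)
        moreover have "lval N (env(0 := zz + nmul P e)) t = lval N (env(0 := zz)) t + zmul (fst t 0) (nmul P e)"
          using lval_decomp[OF N, of env] by (simp add: zmul_add_right algebra_simps)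
        ultimately show ?thesis using Lt by simp
      next
        case nL: False
        have "lsat N (env(0 := zz + nmul P e)) L \<longleftrightarrow> lsat N (env(0 := zz)) L"
          by (rule lit_shift[OF N]) (use nL lmod_dvd_prod[OF L] in \<open>auto simp: P_def\<close>)
        then show ?thesis using C(2) L unfolding csat_def by auto
      qed
    qed
    then have "dsat N (env(0 := zz + nmul P e)) F" using C(1) unfolding dsat_def by blast
    then have "zz + nmul P e = zz" by (rule uniq)
    then show ?thesis using Pe by simp
  qed
qed

context
  fixes iota :: "'z::linordered_ab_group_add \<Rightarrow> 'q::linordered_ab_group_add"
  assumes h: "divisible_hull iota"
begin

lemma iota_add: "iota (a + b) = iota a + iota b"
  using h unfolding divisible_hull_def by blast

lemma iota_sm: "a < b \<Longrightarrow> iota a < iota b"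
  using h unfolding divisible_hull_def by blast

lemma iota_0: "iota 0 = 0"
  using iota_add[of 0 0] by simp

lemma iota_less: "iota a < iota b \<longleftrightarrow> a < b"
proof
  assume H: "iota a < iota b"
  show "a < b"
  proof (rule ccontr)
    assume "\<not> a < b" then have "b < a \<or> b = a" by auto
    then show False using iota_sm[of b a] H by auto
  qed
qed (rule iota_sm)

lemma iota_le: "iota a \<le> iota b \<longleftrightarrow> a \<le> b"
  using iota_less[of b a] by (simp add: not_less[symmetric])

lemma iota_eq: "iota a = iota b \<longleftrightarrow> a = b"
  using iota_le[of a b] iota_le[of b a] by (auto intro: antisym)

lemma iota_minus: "iota (- a) = - iota a"
proof -
  have "iota a + iota (- a) = 0" using iota_add[of a "-a"] iota_0 by simp
  then show ?thesis by (simp add: add_eq_0_iff2)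
qed

lemma iota_diff: "iota (a - b) = iota a - iota b"
  using iota_add[of a "-b"] iota_minus[of b] by simp

lemma iota_nmul: "iota (nmul n a) = nmul n (iota a)"
  by (rule nmul_hom) (rule iota_add)

end

lemma iota_sum:
  fixes iota :: "'z::linordered_ab_group_add \<Rightarrow> 'q::linordered_ab_group_add"
  assumes h: "divisible_hull iota"
  shows "iota (sum g S) = (\<Sum>i\<in>S. iota (g i))"
  using sum_comp_morphism[of iota g S] iota_0[OF h] iota_add[OF h] by (simp add: comp_def)

lemma lattice_gap:
  fixes iota :: "'z::linordered_ab_group_add \<Rightarrow> 'q::linordered_ab_group_add" and e :: 'z and q :: 'q
  assumes z: "zgroup e" and h: "divisible_hull iota"
  shows "\<exists>d>0. \<forall>y. q - d < iota y \<and> iota y < q + d \<longrightarrow> iota y = q"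
proof -
  obtain n w where n: "n \<ge> 1" and nw: "nmul n q = iota w"
    using h unfolding divisible_hull_def by blast
  obtain d where d: "nmul n d = iota e" using h n unfolding divisible_hull_def by blast
  have e0: "0 < e" using z unfolding zgroup_def by simp
  have ie0: "0 < iota e" using iota_less[OF h, of 0 e] iota_0[OF h] e0 by simp
  have d0: "0 < d"
  proof (rule ccontr)
    assume "\<not> 0 < d" then have "d \<le> 0" by simp
    then have "nmul n d \<le> 0" using nmul_mono[of d 0 n] by simp
    then show False using d ie0 by simp
  qed
  have "\<forall>y. q - d < iota y \<and> iota y < q + d \<longrightarrow> iota y = q"
  proof (intro allI impI)
    fix y assume H: "q - d < iota y \<and> iota y < q + d"
    have a: "iota y - q < d" and b: "q - iota y < d" using H by (auto simp: algebra_simps)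
    have "nmul n (iota y - q) < nmul n d" using nmul_strict_mono[OF a n] .
    then have "iota (nmul n y - w) < iota e"
      using d nw by (simp add: iota_diff[OF h] iota_nmul[OF h] nmul_diff_right)
    then have a': "nmul n y - w < e" using iota_less[OF h] by blast
    have "nmul n (q - iota y) < nmul n d" using nmul_strict_mono[OF b n] .
    then have "iota (w - nmul n y) < iota e"
      using d nw by (simp add: iota_diff[OF h] iota_nmul[OF h] nmul_diff_right)
    then have b': "w - nmul n y < e" using iota_less[OF h] by blast
    have "nmul n y - w = 0"
    proof (rule ccontr)
      assume ne: "nmul n y - w \<noteq> 0"
      show False
      proof (cases "0 < nmul n y - w")
        case True then show False using z a' unfolding zgroup_def by (meson not_le)
      next
        case False
        then have "0 < w - nmul n y" using ne by (simp add: algebra_simps)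
        then show False using z b' unfolding zgroup_def by (meson not_le)
      qed
    qed
    then have "iota (nmul n y) = iota w" by simp
    then have "nmul n (iota y) = nmul n q" using nw by (simp add: iota_nmul[OF h])
    then show "iota y = q" using nmul_inj[OF n] by blast
  qed
  then show ?thesis using d0 by blast
qed

section \<open>Topology\<close>

definition Iv :: "'q::linorder \<Rightarrow> 'q \<Rightarrow> 'q ext set" where
  "Iv a b = {y. eless (Fin a) y \<and> eless y (Fin b)}"
definition Ray :: "'q::linorder \<Rightarrow> 'q ext set" where
  "Ray a = {y. eless (Fin a) y}"

lemma Iv_iff: "y \<in> Iv a b \<longleftrightarrow> (\<exists>q. y = Fin q \<and> a < q \<and> q < b)"
  by (cases y) (auto simp: Iv_def)
lemma Ray_iff: "y \<in> Ray a \<longleftrightarrow> y = PInf \<or> (\<exists>q. y = Fin q \<and> a < q)"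
  by (cases y) (auto simp: Ray_def)

lemma open_Iv: "openin Omega_top (Iv a b)"
  unfolding Omega_top_def Iv_def by (rule topology_generated_by_Basis) blast
lemma open_Ray: "openin Omega_top (Ray a)"
  unfolding Omega_top_def Ray_def by (rule topology_generated_by_Basis) blast
lemma open_UNIV_Omega: "openin Omega_top (topspace Omega_top)" by simp

lemma topspace_Omega:
  assumes c: "0 < (c::'q::linordered_ab_group_add)"
  shows "topspace (Omega_top :: 'q ext topology) = UNIV"
proof -
  have "y \<in> topspace (Omega_top :: 'q ext topology)" for y :: "'q ext"
  proof (cases y)
    case (Fin a)
    have "y \<in> Ray (a - c)" using Fin c by (simp add: Ray_iff)
    then show ?thesis using open_Ray openin_subset by blast
  next
    case PInf
    have "y \<in> Ray 0" using PInf by (simp add: Ray_iff)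
    then show ?thesis using open_Ray openin_subset by blast
  qed
  then show ?thesis by blast
qed

lemma topspace_Om:
  assumes c: "0 < (c::'q::linordered_ab_group_add)"
  shows "topspace (Omega_m_top m :: (nat \<Rightarrow> 'q ext) topology) = PiE {1..m} (\<lambda>_. UNIV)"
  unfolding Omega_m_top_def using topspace_Omega[OF c] by simp

lemma open_box:
  assumes c: "0 < (c::'q::linordered_ab_group_add)"
    and U: "\<And>i. i \<in> {1..m} \<Longrightarrow> U i = UNIV \<or> openin Omega_top (U i)"
  shows "openin (Omega_m_top m :: (nat \<Rightarrow> 'q ext) topology) (PiE {1..m} U)"
  unfolding Omega_m_top_def openin_PiE_gen
  using U topspace_Omega[OF c] by (metis (no_types, lifting) finite_atLeastAtMost finite_subset mem_Collect_eq subsetI openin_topspace)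

context
  fixes e :: "'z::linordered_ab_group_add" and iota :: "'z \<Rightarrow> 'q::linordered_ab_group_add"
    and m :: nat and I :: "nat set" and A :: "(nat \<Rightarrow> 'z ext) set"
  assumes z: "zgroup e" and h: "divisible_hull iota" and I: "I \<subseteq> {1..m}"
    and AF: "A \<subseteq> F_I m I" and nonneg: "\<forall>x\<in>A. \<forall>i\<in>I. 0 \<le> eval (x i)"
begin

lemma c0: "0 < iota e"
  using iota_less[OF h, of 0 e] iota_0[OF h] z unfolding zgroup_def by simp

lemma topT: "topspace (Omega_m_top m :: (nat \<Rightarrow> 'q ext) topology) = PiE {1..m} (\<lambda>_. UNIV)"
  by (rule topspace_Om[OF c0])

lemma openbox: "(\<And>i. i \<in> {1..m} \<Longrightarrow> U i = UNIV \<or> openin Omega_top (U i)) \<Longrightarrow>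
   openin (Omega_m_top m :: (nat \<Rightarrow> 'q ext) topology) (PiE {1..m} U)"
  by (rule open_box[OF c0])

lemma A_F: "x \<in> A \<Longrightarrow> x \<in> PiE {1..m} (\<lambda>_. UNIV) \<and> (\<forall>i\<in>{1..m}. x i \<noteq> PInf \<longleftrightarrow> i \<in> I)"
  using AF unfolding F_I_def Gamma_m_def by auto

lemma lift_I: "x \<in> A \<Longrightarrow> i \<in> I \<Longrightarrow> lift m iota x i = Fin (iota (eval (x i)))"
proof -
  assume x: "x \<in> A" and i: "i \<in> I"
  have im: "i \<in> {1..m}" using i I by auto
  have "x i \<noteq> PInf" using A_F[OF x] im i by auto
  then obtain a where "x i = Fin a" by (cases "x i") auto
  then show ?thesis using im by (simp add: lift_def)
qed

lemma lift_nI: "x \<in> A \<Longrightarrow> i \<in> {1..m} \<Longrightarrow> i \<notin> I \<Longrightarrow> lift m iota x i = PInf"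
proof -
  assume x: "x \<in> A" and i: "i \<in> {1..m}" "i \<notin> I"
  have "x i = PInf" using A_F[OF x] i by auto
  then show ?thesis using i by (simp add: lift_def)
qed

lemma lift_top: "lift m iota x \<in> PiE {1..m} (\<lambda>_. UNIV)"
  by (simp add: lift_def)

abbreviation "CC \<equiv> gclosure m iota A"

lemma C_top: "CC \<subseteq> PiE {1..m} (\<lambda>_. UNIV)"
proof -
  have "(Omega_m_top m :: (nat \<Rightarrow> 'q ext) topology) closure_of (lift m iota ` A) \<subseteq> topspace (Omega_m_top m :: (nat \<Rightarrow> 'q ext) topology)"
    by (rule closure_of_subset_topspace)
  then show ?thesis unfolding gclosure_def topT .
qed

lemma inC: "p \<in> CC \<Longrightarrow> openin (Omega_m_top m) W \<Longrightarrow> p \<in> W \<Longrightarrow> \<exists>x\<in>A. lift m iota x \<in> W"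
  unfolding gclosure_def in_closure_of by blast

lemma K2: "p \<in> CC \<Longrightarrow> j \<in> {1..m} \<Longrightarrow> j \<notin> I \<Longrightarrow> p j = PInf"
proof (rule ccontr)
  assume p: "p \<in> CC" and j: "j \<in> {1..m}" "j \<notin> I" and ne: "p j \<noteq> PInf"
  then obtain q where q: "p j = Fin q" by (cases "p j") auto
  define W where "W = PiE {1..m} (\<lambda>i. if i = j then Iv (q - iota e) (q + iota e) else UNIV)"
  have "openin (Omega_m_top m) W" unfolding W_def by (rule openbox) (auto simp: open_Iv)
  moreover have "p \<in> W" using C_top p q c0 unfolding W_def by (auto simp: Iv_iff PiE_iff)
  ultimately obtain x where x: "x \<in> A" "lift m iota x \<in> W" using inC[OF p] by blast
  then have "lift m iota x j \<in> Iv (q - iota e) (q + iota e)" unfolding W_def using PiE_mem[OF _ j(1)] by fastforce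
  then show False using lift_nI[OF x(1) j] by (simp add: Iv_iff)
qed

lemma K3: "p \<in> CC \<Longrightarrow> i \<in> I \<Longrightarrow> p i = Fin q \<Longrightarrow> 0 \<le> q"
proof (rule ccontr)
  assume p: "p \<in> CC" and i: "i \<in> I" and q: "p i = Fin q" and neg: "\<not> 0 \<le> q"
  define W where "W = PiE {1..m} (\<lambda>j. if j = i then Iv (q - iota e) 0 else UNIV)"
  have "openin (Omega_m_top m) W" unfolding W_def by (rule openbox) (auto simp: open_Iv)
  moreover have "p \<in> W" using C_top p q c0 neg unfolding W_def by (auto simp: Iv_iff PiE_iff)
  ultimately obtain x where x: "x \<in> A" "lift m iota x \<in> W" using inC[OF p] by blast
  have im: "i \<in> {1..m}" using i I by auto
  then have "lift m iota x i \<in> Iv (q - iota e) 0" using x(2) PiE_mem[OF _ im] unfolding W_def by fastforce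
  then have "iota (eval (x i)) < 0" using lift_I[OF x(1) i] by (simp add: Iv_iff)
  moreover have "0 \<le> iota (eval (x i))" using nonneg x(1) i iota_le[OF h, of 0] iota_0[OF h] by metis
  ultimately show False by simp
qed

definition dq :: "'q \<Rightarrow> 'q" where
  "dq q = (SOME d. 0 < d \<and> (\<forall>y. q - d < iota y \<and> iota y < q + d \<longrightarrow> iota y = q))"

lemma dq: "0 < dq q \<and> (\<forall>y. q - dq q < iota y \<and> iota y < q + dq q \<longrightarrow> iota y = q)"
  unfolding dq_def by (rule someI_ex) (use lattice_gap[OF z h, of q] in blast)

definition WW :: "(nat \<Rightarrow> 'q ext) \<Rightarrow> (nat \<Rightarrow> 'q ext) set" where
  "WW p = PiE {1..m} (\<lambda>i. if i \<in> I then Iv (eval (p i) - dq (eval (p i))) (eval (p i) + dq (eval (p i))) else UNIV)"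

lemma WW_open: "openin (Omega_m_top m) (WW p)"
  unfolding WW_def by (rule openbox) (auto simp: open_Iv)

lemma WW_mem: "p \<in> CC \<Longrightarrow> \<forall>i\<in>I. p i \<noteq> PInf \<Longrightarrow> p \<in> WW p"
proof -
  assume p: "p \<in> CC" and f: "\<forall>i\<in>I. p i \<noteq> PInf"
  have "\<And>i. i \<in> I \<Longrightarrow> p i \<in> Iv (eval (p i) - dq (eval (p i))) (eval (p i) + dq (eval (p i)))"
  proof -
    fix i assume "i \<in> I"
    then obtain a where "p i = Fin a" using f by (cases "p i") auto
    then show "p i \<in> Iv (eval (p i) - dq (eval (p i))) (eval (p i) + dq (eval (p i)))"
      using dq[of a] by (simp add: Iv_iff)
  qed
  then show ?thesis using C_top p unfolding WW_def by (auto simp: PiE_iff)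
qed

lemma WW_fin: "y \<in> WW p \<Longrightarrow> i \<in> I \<Longrightarrow> y i \<noteq> PInf"
proof -
  assume y: "y \<in> WW p" and i: "i \<in> I"
  have im: "i \<in> {1..m}" using i I by auto
  have "y i \<in> Iv (eval (p i) - dq (eval (p i))) (eval (p i) + dq (eval (p i)))"
    using PiE_mem[OF y[unfolded WW_def] im] i by simp
  then show ?thesis by (auto simp: Iv_iff)
qed

lemma WW_lift: "p \<in> CC \<Longrightarrow> \<forall>i\<in>I. p i \<noteq> PInf \<Longrightarrow> x \<in> A \<Longrightarrow> lift m iota x \<in> WW p \<Longrightarrow> lift m iota x = p"
proof
  fix i
  assume p: "p \<in> CC" and pf: "\<forall>i\<in>I. p i \<noteq> PInf" and x: "x \<in> A" and w: "lift m iota x \<in> WW p"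
  show "lift m iota x i = p i"
  proof (cases "i \<in> {1..m}")
    case False
    then show ?thesis using C_top p lift_top[of x] by (auto simp: PiE_def extensional_def)
  next
    case True
    show ?thesis
    proof (cases "i \<in> I")
      case False
      then show ?thesis using K2[OF p True False] lift_nI[OF x True False] by simp
    next
      case iI: True
      have "lift m iota x i \<in> Iv (eval (p i) - dq (eval (p i))) (eval (p i) + dq (eval (p i)))"
        using PiE_mem[OF w[unfolded WW_def] True] iI by simp
      then have "eval (p i) - dq (eval (p i)) < iota (eval (x i)) \<and> iota (eval (x i)) < eval (p i) + dq (eval (p i))"
        using lift_I[OF x iI] by (simp add: Iv_iff)
      then have eq: "iota (eval (x i)) = eval (p i)" using dq by blast
      have "p i \<noteq> PInf" using pf iI by blast
      then obtain a where "p i = Fin a" by (cases "p i") auto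
      then show ?thesis using lift_I[OF x iI] eq by simp
    qed
  qed
qed

lemma K4: "p \<in> CC \<Longrightarrow> \<forall>i\<in>I. p i \<noteq> PInf \<Longrightarrow> p \<in> lift m iota ` A"
proof -
  assume p: "p \<in> CC" and f: "\<forall>i\<in>I. p i \<noteq> PInf"
  obtain x where x: "x \<in> A" "lift m iota x \<in> WW p" using inC[OF p WW_open WW_mem[OF p f]] by blast
  then show ?thesis using WW_lift[OF p f x(1) x(2)] by blast
qed

lemma iso: "p \<in> CC \<Longrightarrow> \<forall>i\<in>I. p i \<noteq> PInf \<Longrightarrow> p' \<in> WW p \<Longrightarrow> p' \<in> CC \<Longrightarrow> p' = p"
proof -
  assume p: "p \<in> CC" and f: "\<forall>i\<in>I. p i \<noteq> PInf" and w: "p' \<in> WW p" and p': "p' \<in> CC"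
  have "\<forall>i\<in>I. p' i \<noteq> PInf" using WW_fin[OF w] by blast
  then obtain x where x: "x \<in> A" "p' = lift m iota x" using K4[OF p'] by blast
  then show ?thesis using WW_lift[OF p f x(1)] w by simp
qed

definition fb :: "nat \<Rightarrow> 'z \<Rightarrow> (nat \<Rightarrow> 'q ext) \<Rightarrow> 'q ext" where
  "fb \<alpha> \<beta> p = (if \<forall>i\<in>I. p i \<noteq> PInf then Fin (iota \<beta> + nmul \<alpha> (\<Sum>i\<in>I. eval (p i))) else PInf)"

lemma finI: "finite I" using I finite_subset by blast

lemma sum_ge_elem:
  fixes g :: "nat \<Rightarrow> 'a::ordered_comm_monoid_add"
  assumes "k \<in> I" "\<And>i. i \<in> I \<Longrightarrow> 0 \<le> g i"
  shows "g k \<le> sum g I"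
proof -
  have "sum g I = g k + sum g (I - {k})" using sum.remove[OF finI assms(1)] .
  moreover have "0 \<le> sum g (I - {k})" using assms(2) by (intro sum_nonneg) auto
  ultimately show ?thesis by (simp add: add_increasing2)
qed

lemma fb_ext: "x \<in> A \<Longrightarrow> fb \<alpha> \<beta> (lift m iota x) = Fin (iota (\<beta> + nmul \<alpha> (\<Sum>i\<in>I. eval (x i))))"
proof -
  assume x: "x \<in> A"
  have "\<forall>i\<in>I. lift m iota x i \<noteq> PInf" using lift_I[OF x] by simp
  moreover have "(\<Sum>i\<in>I. eval (lift m iota x i)) = iota (\<Sum>i\<in>I. eval (x i))"
    using lift_I[OF x] by (simp add: iota_sum[OF h])
  ultimately show ?thesis unfolding fb_def by (simp add: iota_add[OF h] iota_nmul[OF h])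
qed

lemma fb_frontier: "p \<in> gfrontier m iota A \<Longrightarrow> fb \<alpha> \<beta> p = PInf"
proof (rule ccontr)
  assume pf: "p \<in> gfrontier m iota A" and ne: "fb \<alpha> \<beta> p \<noteq> PInf"
  then have f: "\<forall>i\<in>I. p i \<noteq> PInf" unfolding fb_def by (auto split: if_splits)
  have "p \<in> Omega_m_top m closure_of CC"
    using pf closure_of_mono[of "CC - lift m iota ` A" CC "Omega_m_top m"] unfolding gfrontier_def by blast
  then have p: "p \<in> CC" unfolding gclosure_def closure_of_closure_of .
  have "\<exists>y. y \<in> CC - lift m iota ` A \<and> y \<in> WW p"
    using pf WW_open WW_mem[OF p f] unfolding gfrontier_def in_closure_of by blast
  then obtain y where y: "y \<in> CC" "y \<notin> lift m iota ` A" "y \<in> WW p" by blast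
  have "\<forall>i\<in>I. y i \<noteq> PInf" using WW_fin[OF y(3)] by blast
  then show False using K4[OF y(1)] y(2) by blast
qed

lemma fb_cont:
  assumes \<alpha>: "\<alpha> \<ge> 1"
  shows "continuous_map (subtopology (Omega_m_top m) CC) Omega_top (fb \<alpha> \<beta>)"
  unfolding Omega_top_def
proof (rule continuous_on_generated_topo)
  show "fb \<alpha> \<beta> ` topspace (subtopology (Omega_m_top m) CC)
        \<subseteq> \<Union> ({{y. eless a y \<and> eless y b} |a b. True} \<union> {{y. eless a y} |a. True})"
    using topspace_Omega[OF c0] unfolding Omega_top_def by simp
  fix U :: "'q ext set" assume U: "U \<in> {{y. eless a y \<and> eless y b} |a b. True} \<union> {{y. eless a y} |a. True}"
  have tsp: "topspace (subtopology (Omega_m_top m) CC) = CC"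
    using C_top topT by (simp add: inf.absorb2)
  show "openin (subtopology (Omega_m_top m) CC) (fb \<alpha> \<beta> -` U \<inter> topspace (subtopology (Omega_m_top m) CC))"
    unfolding tsp
  proof (subst openin_subopen, intro ballI)
    fix p assume pP: "p \<in> fb \<alpha> \<beta> -` U \<inter> CC"
    then have p: "p \<in> CC" and pU: "fb \<alpha> \<beta> p \<in> U" by auto
    show "\<exists>T. openin (subtopology (Omega_m_top m) CC) T \<and> p \<in> T \<and> T \<subseteq> fb \<alpha> \<beta> -` U \<inter> CC"
    proof (cases "\<forall>i\<in>I. p i \<noteq> PInf")
      case True
      have "CC \<inter> WW p \<subseteq> fb \<alpha> \<beta> -` U \<inter> CC" using iso[OF p True] pU by auto
      moreover have "openin (subtopology (Omega_m_top m) CC) (CC \<inter> WW p)"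
        by (rule openin_subtopology_Int2[OF WW_open])
      moreover have "p \<in> CC \<inter> WW p" using p WW_mem[OF p True] by simp
      ultimately show ?thesis by blast
    next
      case False
      then obtain k where k: "k \<in> I" "p k = PInf" by blast
      have fbp: "fb \<alpha> \<beta> p = PInf" using False unfolding fb_def by simp
      obtain a0 where U': "U = Ray a0"
      proof -
        from U show thesis
        proof
          assume "U \<in> {{y. eless a y \<and> eless y b} |a b. True}"
          then obtain a b where "U = {y. eless a y \<and> eless y b}" by blast
          then show thesis using pU fbp by simp
        next
          assume "U \<in> {{y. eless a y} |a. True}"
          then obtain a where Ua: "U = {y. eless a y}" by blast
          show thesis
          proof (cases a)
            case (Fin a0) then show thesis using that Ua by (simp add: Ray_def)
          next
            case PInf then show thesis using Ua pU fbp by simp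
          qed
        qed
      qed
      have km: "k \<in> {1..m}" using k I by auto
      define W where "W = PiE {1..m} (\<lambda>i. if i = k then Ray (a0 - iota \<beta>) else UNIV)"
      have Wo: "openin (Omega_m_top m) W" unfolding W_def by (rule openbox) (auto simp: open_Ray)
      have pW: "p \<in> W" using C_top p k(2) unfolding W_def by (auto simp: PiE_iff Ray_iff)
      have "CC \<inter> W \<subseteq> fb \<alpha> \<beta> -` U \<inter> CC"
      proof
        fix p' assume p': "p' \<in> CC \<inter> W"
        show "p' \<in> fb \<alpha> \<beta> -` U \<inter> CC"
        proof (cases "\<forall>i\<in>I. p' i \<noteq> PInf")
          case False
          then have "fb \<alpha> \<beta> p' = PInf" unfolding fb_def by simp
          then show ?thesis using p' U' by (simp add: Ray_iff)
        next
          case True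
          have nn: "\<And>i. i \<in> I \<Longrightarrow> 0 \<le> eval (p' i)"
          proof -
            fix i assume i: "i \<in> I"
            then obtain q where "p' i = Fin q" using True by (cases "p' i") auto
            then show "0 \<le> eval (p' i)" using K3[of p' i q] p' i by auto
          qed
          have "p' \<in> W" using p' by simp
          then have "p' k \<in> (if k = k then Ray (a0 - iota \<beta>) else UNIV)"
            unfolding W_def by (rule PiE_mem) (rule km)
          then have "p' k \<in> Ray (a0 - iota \<beta>)" by simp
          then obtain t where t: "p' k = Fin t" "a0 - iota \<beta> < t" using True k(1) by (auto simp: Ray_iff)
          have "t \<le> (\<Sum>i\<in>I. eval (p' i))" using sum_ge_elem[OF k(1), of "\<lambda>i. eval (p' i)"] nn t(1) by simp
          also have "\<dots> \<le> nmul \<alpha> (\<Sum>i\<in>I. eval (p' i))"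
            by (rule nmul_ge_self[OF _ \<alpha>]) (rule sum_nonneg, rule nn)
          finally have tle: "t \<le> nmul \<alpha> (\<Sum>i\<in>I. eval (p' i))" .
          have "a0 < t + iota \<beta>" using t(2) by (simp add: algebra_simps)
          also have "\<dots> \<le> nmul \<alpha> (\<Sum>i\<in>I. eval (p' i)) + iota \<beta>" using tle by (rule add_right_mono)
          finally have "a0 < iota \<beta> + nmul \<alpha> (\<Sum>i\<in>I. eval (p' i))" by (simp add: add.commute)
          then show ?thesis using True p' U' unfolding fb_def by (simp add: Ray_iff)
        qed
      qed
      moreover have "openin (subtopology (Omega_m_top m) CC) (CC \<inter> W)"
        by (rule openin_subtopology_Int2[OF Wo])
      moreover have "p \<in> CC \<inter> W" using p pW by simp
      ultimately show ?thesis by blast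
    qed
  qed
qed

end

lemma sum_elem_le:
  fixes g :: "'i \<Rightarrow> 'a::ordered_comm_monoid_add"
  assumes "finite S" "k \<in> S" "\<And>i. i \<in> S \<Longrightarrow> 0 \<le> g i"
  shows "g k \<le> sum g S"
proof -
  have "sum g S = g k + sum g (S - {k})" using sum.remove[OF assms(1,2)] .
  moreover have "0 \<le> sum g (S - {k})" using assms(3) by (intro sum_nonneg) auto
  ultimately show ?thesis by (simp add: add_increasing2)
qed

lemma fun_bound:
  fixes e :: "'z::linordered_ab_group_add" and iota :: "'z \<Rightarrow> 'q::linordered_ab_group_add"
    and g :: "(nat \<Rightarrow> 'z ext) \<Rightarrow> 'q"
  assumes z: "zgroup e" and h: "divisible_hull iota" and I: "I \<subseteq> {1..m}"
    and AF: "A \<subseteq> F_I m I" and nonneg: "\<forall>x\<in>A. \<forall>i\<in>I. 0 \<le> eval (x i)"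
    and df: "definable_fun e iota m A (\<lambda>x. Fin (g x))"
  shows "\<exists>b1 b2. 0 \<le> b1 \<and> (\<forall>x\<in>A. g x \<le> iota (b1 + nmul b2 (\<Sum>i\<in>I. eval (x i))))"
proof (cases "A = {}")
  case True then show ?thesis by auto
next
  case False
  then obtain x0 where x0: "x0 \<in> A" by blast
  have finI: "finite I" using I finite_subset by blast
  obtain n where n: "n \<ge> 1" and rng: "\<forall>x\<in>A. emul n (Fin (g x)) \<in> range (emap iota)"
    and KK: "\<forall>K\<subseteq>{1..m}. (\<forall>x\<in>A \<inter> F_I m K. Fin (g x) = PInf) \<or>
        ((\<forall>x\<in>A \<inter> F_I m K. Fin (g x) \<noteq> PInf) \<and>
         (\<exists>\<psi>. \<forall>x\<in>F_I m K. \<forall>z. (x \<in> A \<and> emul n (Fin (g x)) = Fin (iota z))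
                 \<longleftrightarrow> psat e ((coord_env K x)(0 := z)) \<psi>))"
    using df unfolding definable_fun_def by blast
  have "\<not> (\<forall>x\<in>A \<inter> F_I m I. Fin (g x) = PInf)" using x0 AF by auto
  then obtain \<psi> where psi: "\<forall>x\<in>F_I m I. \<forall>z. (x \<in> A \<and> emul n (Fin (g x)) = Fin (iota z))
                 \<longleftrightarrow> psat e ((coord_env I x)(0 := z)) \<psi>"
    using KK I by blast
  define N where "N = Suc (Max (insert 0 (fvs \<psi>)))"
  have fin: "finite (insert 0 (fvs \<psi>))" by (simp add: finite_fvs)
  have sub: "fvs \<psi> \<subseteq> {..<N}"
  proof
    fix i assume "i \<in> fvs \<psi>"
    then have "i \<le> Max (insert 0 (fvs \<psi>))" using Max_ge[OF fin] by blast
    then show "i \<in> {..<N}" unfolding N_def by simp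
  qed
  have N0: "0 < N" unfolding N_def by simp
  obtain F where wf: "wfd F" and F: "\<forall>env. psat e env \<psi> \<longleftrightarrow> dsat N env F"
    using qe[OF z sub] by blast
  have "\<forall>x\<in>A. g x \<le> iota (B1 F + nmul (B2 N F) (\<Sum>i\<in>I. eval (x i)))"
  proof
    fix x assume x: "x \<in> A"
    define S where "S = (\<Sum>i\<in>I. eval (x i))"
    have S0: "0 \<le> S" unfolding S_def using nonneg x by (intro sum_nonneg) auto
    obtain w where w: "emul n (Fin (g x)) = emap iota w" using rng x by blast
    then obtain z0 where z0: "nmul n (g x) = iota z0"
      by (cases w) (auto simp: emul_def)
    define env where "env = coord_env I x"
    have xF: "x \<in> F_I m I" using x AF by blast
    have iff: "\<And>z'. dsat N (env(0 := z')) F \<longleftrightarrow> z' = z0"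
    proof -
      fix z'
      have "dsat N (env(0 := z')) F \<longleftrightarrow> psat e ((coord_env I x)(0 := z')) \<psi>" using F env_def by simp
      also have "\<dots> \<longleftrightarrow> (x \<in> A \<and> emul n (Fin (g x)) = Fin (iota z'))" using psi xF by blast
      also have "\<dots> \<longleftrightarrow> iota z0 = iota z'" using x z0 by (simp add: emul_def)
      also have "\<dots> \<longleftrightarrow> z' = z0" using iota_eq[OF h] by metis
      finally show "dsat N (env(0 := z')) F \<longleftrightarrow> z' = z0" .
    qed
    have envb: "\<And>i. i \<noteq> 0 \<Longrightarrow> 0 \<le> env i \<and> env i \<le> S"
    proof -
      fix i :: nat
      show "0 \<le> env i \<and> env i \<le> S"
      proof (cases "i \<in> I")
        case True
        then show ?thesis unfolding env_def coord_env_def S_def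
          using nonneg x sum_elem_le[OF finI True, of "\<lambda>i. eval (x i)"] by auto
      next
        case False
        then show ?thesis unfolding env_def coord_env_def using S0 by simp
      qed
    qed
    have zb: "z0 \<le> B1 F + nmul (B2 N F) S"
      by (rule bound_lemma[OF z N0 wf envb]) (use iff S0 in auto)
    define Y where "Y = B1 F + nmul (B2 N F) S"
    have Y0: "0 \<le> Y" unfolding Y_def using add_nonneg_nonneg[OF B1_nonneg nmul_nonneg[OF S0]] .
    have iY0: "0 \<le> iota Y" using Y0 iota_le[OF h, of 0 Y] iota_0[OF h] by simp
    have ngY: "nmul n (g x) \<le> iota Y" using zb z0 iota_le[OF h] unfolding Y_def by metis
    show "g x \<le> iota (B1 F + nmul (B2 N F) (\<Sum>i\<in>I. eval (x i)))"
    proof (cases "g x \<le> 0")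
      case True then show ?thesis using iY0 unfolding Y_def S_def by simp
    next
      case False
      then have "g x \<le> nmul n (g x)" using nmul_ge_self[of "g x" n] n by simp
      then show ?thesis using ngY unfolding Y_def S_def by simp
    qed
  qed
  then show ?thesis using B1_nonneg by blast
qed

theorem proposition4p1:
  fixes e :: "'z::linordered_ab_group_add"
    and iota :: "'z \<Rightarrow> 'q::linordered_ab_group_add"
    and m :: nat and I :: "nat set"
    and A :: "(nat \<Rightarrow> 'z ext) set"
    and r :: nat and fs :: "nat \<Rightarrow> (nat \<Rightarrow> 'z ext) \<Rightarrow> 'q"
  assumes "zgroup e"
    and "divisible_hull iota"
    and "I \<subseteq> {1..m}"
    and "A \<subseteq> F_I m I"
    and "definable_set e m A"
    and "\<forall>x\<in>A. \<forall>i\<in>I. 0 \<le> eval (x i)"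
    and "\<forall>j<r. definable_fun e iota m A (\<lambda>x. Fin (fs j x))"
  shows "\<exists>f :: (nat \<Rightarrow> 'z ext) \<Rightarrow> 'z. \<exists>fbar.
           integrally_affine I A f \<and>
           largely_continuous m iota A f \<and>
           (\<forall>x\<in>A. 0 < f x) \<and>
           (\<forall>x\<in>A. \<forall>j<r. fs j x \<le> iota (f x)) \<and>
           cont_extension m iota A f fbar \<and>
           (\<forall>p\<in>gfrontier m iota A. fbar p = PInf) \<and>
           (\<exists>(\<alpha>::int) \<beta>. 0 < \<alpha> \<and> (\<forall>x\<in>A. f x = \<beta> + zmul \<alpha> (\<Sum>i\<in>I. eval (x i))))"
proof -
  note z = assms(1) and h = assms(2) and I = assms(3) and AF = assms(4) and nonneg = assms(6)
  define S where "S x = (\<Sum>i\<in>I. eval (x i))" for x :: "nat \<Rightarrow> 'z ext"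
  have S0: "\<And>x. x \<in> A \<Longrightarrow> 0 \<le> S x" unfolding S_def using nonneg by (intro sum_nonneg) auto
  have "\<forall>j. \<exists>p. j < r \<longrightarrow> 0 \<le> fst p \<and> (\<forall>x\<in>A. fs j x \<le> iota (fst p + nmul (snd p) (S x)))"
  proof
    fix j
    show "\<exists>p. j < r \<longrightarrow> 0 \<le> fst p \<and> (\<forall>x\<in>A. fs j x \<le> iota (fst p + nmul (snd p) (S x)))"
    proof (cases "j < r")
      case True
      have df: "definable_fun e iota m A (\<lambda>x. Fin (fs j x))" using assms(7)[rule_format, OF True] .
      obtain b1 b2 where b: "0 \<le> b1" "\<forall>x\<in>A. fs j x \<le> iota (b1 + nmul b2 (\<Sum>i\<in>I. eval (x i)))"
        using fun_bound[OF z h I AF nonneg df] by blast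
      have "\<forall>x\<in>A. fs j x \<le> iota (b1 + nmul b2 (S x))" using b(2) unfolding S_def .
      then show ?thesis using b(1) by (intro exI[of _ "(b1, b2)"]) simp
    qed simp
  qed
  then have "\<exists>P. \<forall>j. j < r \<longrightarrow> 0 \<le> fst (P j) \<and> (\<forall>x\<in>A. fs j x \<le> iota (fst (P j) + nmul (snd (P j)) (S x)))"
    by (rule choice)
  then obtain P where P0: "\<forall>j. j < r \<longrightarrow> 0 \<le> fst (P j) \<and> (\<forall>x\<in>A. fs j x \<le> iota (fst (P j) + nmul (snd (P j)) (S x)))"
    by (rule exE)
  have P: "\<And>j. j < r \<Longrightarrow> 0 \<le> fst (P j) \<and> (\<forall>x\<in>A. fs j x \<le> iota (fst (P j) + nmul (snd (P j)) (S x)))"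
    by (rule mp[OF spec[OF P0]])
  define \<alpha> where "\<alpha> = Suc (\<Sum>j<r. snd (P j))"
  define \<beta> where "\<beta> = e + (\<Sum>j<r. fst (P j))"
  define f where "f x = \<beta> + zmul (int \<alpha>) (S x)" for x
  define fbar where "fbar = fb iota I \<alpha> \<beta>"
  have e0: "0 < e" using z unfolding zgroup_def by simp
  have sumP0: "0 \<le> (\<Sum>j<r. fst (P j))" using P by (intro sum_nonneg) auto
  have fx: "\<And>x. f x = \<beta> + nmul \<alpha> (S x)" unfolding f_def by simp
  have a1: "\<alpha> \<ge> 1" unfolding \<alpha>_def by simp
  have ia: "integrally_affine I A f"
    unfolding integrally_affine_def
    by (rule exI[of _ \<beta>], rule exI[of _ "\<lambda>_. int \<alpha>"]) (simp add: f_def S_def zmul_sum)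
  have ce: "cont_extension m iota A f fbar"
    unfolding cont_extension_def fbar_def
    using fb_cont[OF z h I AF nonneg a1, of \<beta>] fb_ext[OF z h I AF nonneg] by (simp add: fx S_def)
  have pos: "\<forall>x\<in>A. 0 < f x"
  proof
    fix x assume x: "x \<in> A"
    have "0 < \<beta>" unfolding \<beta>_def using e0 sumP0 by (simp add: add_pos_nonneg)
    then show "0 < f x" unfolding fx using nmul_nonneg[OF S0[OF x]] by (simp add: add_pos_nonneg)
  qed
  have bnd: "\<forall>x\<in>A. \<forall>j<r. fs j x \<le> iota (f x)"
  proof (intro ballI allI impI)
    fix x j assume x: "x \<in> A" and j: "j < r"
    have "fst (P j) \<le> (\<Sum>j<r. fst (P j))" using sum_elem_le[of "{..<r}" j "\<lambda>j. fst (P j)"] P j by simp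
    also have "\<dots> \<le> \<beta>" unfolding \<beta>_def using e0 by simp
    finally have b: "fst (P j) \<le> \<beta>" .
    have "snd (P j) \<le> \<alpha>" unfolding \<alpha>_def using member_le_sum[of j "{..<r}" "\<lambda>j. snd (P j)"] j by simp
    then have "nmul (snd (P j)) (S x) \<le> nmul \<alpha> (S x)" by (rule nmul_mono_n[OF S0[OF x]])
    then have "fst (P j) + nmul (snd (P j)) (S x) \<le> f x" unfolding fx using b by (simp add: add_mono)
    then have "iota (fst (P j) + nmul (snd (P j)) (S x)) \<le> iota (f x)" by (simp add: iota_le[OF h])
    moreover have "fs j x \<le> iota (fst (P j) + nmul (snd (P j)) (S x))" using bspec[OF conjunct2[OF P[OF j]] x] .
    ultimately show "fs j x \<le> iota (f x)" by (rule order_trans[rotated])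
  qed
  have fr: "\<forall>p\<in>gfrontier m iota A. fbar p = PInf"
    unfolding fbar_def by (intro ballI) (rule fb_frontier[OF z h I AF nonneg])
  have form: "\<exists>(\<alpha>::int) \<beta>. 0 < \<alpha> \<and> (\<forall>x\<in>A. f x = \<beta> + zmul \<alpha> (\<Sum>i\<in>I. eval (x i)))"
  proof -
    have "0 < int \<alpha>" using a1 by simp
    then show ?thesis by (intro exI[of _ "int \<alpha>"] exI[of _ \<beta>]) (simp add: f_def S_def)
  qed
  have lc: "largely_continuous m iota A f" unfolding largely_continuous_def using exI[of "cont_extension m iota A f" fbar, OF ce] .
  show ?thesis
    by (rule exI[of _ f], rule exI[of _ fbar]) (intro conjI ia lc pos bnd ce fr form)
qed

end
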